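(* Let $n\ge 2$ and let $M \in \mathcal{S}_n$ be a simple minimiser, and let $\mathbf{w}$ be a unit eigenvector of $M$ for the eigenvalue $\lambda_{n-1}(M)$. Then, after applying a common permutation to the rows and columns of $M$ (and the same permutation to the coordinates of $\mathbf{w}$), there are integers $P,N \ge 1$ and $Z \ge 0$ with $P+N+Z=n$ such that \[ M = \begin{pmatrix} O_{P} & J_{P,N} & X \\ J_{N,P} & O_{N} & Y \\ X^T & Y^T & W \end{pmatrix}, \] where $X, Y, W$ are $P\times Z$, $N\times Z$ and $Z\times Z$ matrices with entries in $[0,1]$ satisfying $\frac{1}{\sqrt{P}}X^T\mathbf{j}_P = \frac{1}{\sqrt{N}}Y^T\mathbf{j}_N$; moreover \[ \mathbf{w}^T = \begin{pmatrix} \frac{\mathbf{j}_P^T}{\sqrt{2P}} & -\frac{\mathbf{j}_N^T}{\sqrt{2N}} & \mathbf{0}_{Z}^T \end{pmatrix} \quad\text{and}\quad \lambda_{n-1}(M) = -\sqrt{PN}. \]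
   Context: $\mathcal{S}_n$ is the set of $n\times n$ real symmetric matrices with all entries in $[0,1]$; $\lambda_k(M)$ is the $k$-th largest eigenvalue of $M$ counted with multiplicity. A simple minimiser is a matrix $M\in\mathcal{S}_n$ with $\lambda_n(M) < \lambda_{n-1}(M)$ such that $\lambda_{n-1}(M)\le\lambda_{n-1}(M')$ for all $M'\in\mathcal{S}_n$. $O_m$ is the $m\times m$ zero matrix, $J_{m,l}$ the $m\times l$ all-ones matrix, $\mathbf{j}_m$ the all-ones vector of length $m$ and $\mathbf{0}_m$ the zero vector of length $m$. *)

theory Defs
  imports "Jordan_Normal_Form.Char_Poly" "HOL-Computational_Algebra.Polynomial"
begin

definition S :: "nat \<Rightarrow> real mat set" where
  "S n = {M. M \<in> carrier_mat n n \<and> transpose_mat M = M \<and>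
             (\<forall>i<n. \<forall>j<n. 0 \<le> M $$ (i,j) \<and> M $$ (i,j) \<le> 1)}"

text \<open>For a real symmetric
  matrix these are all of its eigenvalues.\<close>
definition eigs_desc :: "real mat \<Rightarrow> real list" where
  "eigs_desc M = rev (sorted_list_of_multiset (proots (char_poly M)))"

text \<open>lambda M k = k-th largest eigenvalue (k counted from 1).\<close>
definition lambda :: "real mat \<Rightarrow> nat \<Rightarrow> real" where
  "lambda M k = eigs_desc M ! (k - 1)"

definition simple_minimiser :: "nat \<Rightarrow> real mat \<Rightarrow> bool" where
  "simple_minimiser n M \<longleftrightarrow> M \<in> S n \<and> lambda M n < lambda M (n - 1) \<and>
     (\<forall>M' \<in> S n. lambda M (n - 1) \<le> lambda M' (n - 1))"

text \<open>The 3x3 block matrix [[O_P, J_{P,N}, X], [J_{N,P}, O_N, Y], [X^T, Y^T, W]].\<close>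
definition block_form :: "nat \<Rightarrow> nat \<Rightarrow> nat \<Rightarrow> real mat \<Rightarrow> real mat \<Rightarrow> real mat \<Rightarrow> real mat" where
  "block_form P N Z X Y W = mat (P + N + Z) (P + N + Z) (\<lambda>(i,j).
     if i < P then (if j < P then 0 else if j < P + N then 1 else X $$ (i, j - P - N))
     else if i < P + N then (if j < P then 1 else if j < P + N then 0 else Y $$ (i - P, j - P - N))
     else (if j < P then X $$ (j, i - P - N) else if j < P + N then Y $$ (j - P, i - P - N)
           else W $$ (i - P - N, j - P - N)))"

definition entries_01 :: "real mat \<Rightarrow> bool" where
  "entries_01 A \<longleftrightarrow> (\<forall>i<dim_row A. \<forall>j<dim_col A. 0 \<le> A $$ (i,j) \<and> A $$ (i,j) \<le> 1)"

end

theory Submission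
  imports Defs
begin

lemma sym_real_eigenvalue:
  fixes A :: "real mat"
  assumes A: "A \<in> carrier_mat n n" and sym: "transpose_mat A = A" and n: "n > 0"
  shows "\<exists>e. eigenvalue A e"
proof -
  define Ac where "Ac = map_mat complex_of_real A"
  have Ac: "Ac \<in> carrier_mat n n" using A by (simp add: Ac_def)
  have cp: "char_poly Ac = map_poly of_real (char_poly A)"
    unfolding Ac_def by (rule of_real_hom.char_poly_hom[OF A])
  have "degree (char_poly Ac) = n" using degree_monic_char_poly[OF Ac] by simp
  then have "\<not> constant (poly (char_poly Ac))" using n by (simp add: constant_degree)
  then obtain c where c: "poly (char_poly Ac) c = 0" using fundamental_theorem_of_algebra by blast
  then have "eigenvalue Ac c" using eigenvalue_root_char_poly[OF Ac] by simp
  then obtain v where ev: "eigenvector Ac v c" unfolding eigenvalue_def by blast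
  then have v: "v \<in> carrier_vec n" and v0: "v \<noteq> 0\<^sub>v n" and Av: "Ac *\<^sub>v v = c \<cdot>\<^sub>v v"
    using Ac unfolding eigenvector_def by auto
  have Aij: "\<And>i j. i < n \<Longrightarrow> j < n \<Longrightarrow> A $$ (j,i) = A $$ (i,j)"
    by (metis A carrier_matD index_transpose_mat(1) sym)
  define s where "s = (\<Sum>i<n. cnj (v$i) * (Ac *\<^sub>v v) $ i)"
  define t where "t = (\<Sum>i<n. cnj (v$i) * v $ i)"
  have s1: "s = c * t" unfolding s_def t_def Av using v
    by (auto simp: sum_distrib_left intro!: sum.cong)
  have s2: "s = (\<Sum>i<n. \<Sum>j<n. cnj (v$i) * of_real (A $$ (i,j)) * v$j)"
    unfolding s_def using v A Ac
    by (auto simp: sum_distrib_left scalar_prod_def Ac_def mult.assoc intro!: sum.cong)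
  have "cnj s = (\<Sum>i<n. \<Sum>j<n. v$i * of_real (A $$ (i,j)) * cnj (v$j))"
    unfolding s2 by (simp add: cnj_sum)
  also have "\<dots> = (\<Sum>j<n. \<Sum>i<n. v$i * of_real (A $$ (i,j)) * cnj (v$j))"
    by (rule sum.swap)
  also have "\<dots> = s" unfolding s2
    by (intro sum.cong refl, simp add: Aij mult.commute mult.left_commute)
  finally have sr: "Im s = 0" by (metis cnj.simps(2) neg_equal_zero)
  have tr: "t = of_real (\<Sum>i<n. (cmod (v$i))^2)" unfolding t_def
    by (simp add: of_real_sum complex_norm_square mult.commute del: of_real_power)
  have "\<exists>i<n. v$i \<noteq> 0" using v v0 by (metis eq_vecI carrier_vecD index_zero_vec)
  then obtain i where i: "i < n" "v$i \<noteq> 0" by blast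
  have "(\<Sum>i<n. (cmod (v$i))^2) > 0"
    by (rule sum_pos2[of _ i], insert i, auto)
  then have t0: "t \<noteq> 0" and tre: "Im t = 0" unfolding tr by (auto simp del: of_real_sum)
  have "c = s / t" using s1 t0 by simp
  then have ci: "Im c = 0" using sr tre t0 by (simp add: Im_divide)
  define e where "e = Re c"
  have ce: "c = of_real e" using ci unfolding e_def by (simp add: complex_eqI)
  have "of_real (poly (char_poly A) e) = (0::complex)"
    using c unfolding cp ce of_real_hom.poly_map_poly by simp
  then have "poly (char_poly A) e = 0" by simp
  then show ?thesis using eigenvalue_root_char_poly[OF A] by blast
qed
lemma householder_exists:
  fixes v :: "real vec"
  assumes v: "v \<in> carrier_vec n" and vv: "v \<bullet> v = 1" and n: "n > 0"
  shows "\<exists>Q. Q \<in> carrier_mat n n \<and> transpose_mat Q * Q = 1\<^sub>m n \<and> (\<forall>i<n. Q $$ (i,0) = v $ i)"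
proof (cases "v = unit_vec n 0")
  case True
  show ?thesis by (rule exI[of _ "1\<^sub>m n"], insert True n, auto simp: unit_vec_def)
next
  case False
  define y where "y = v - unit_vec n 0"
  have y: "y \<in> carrier_vec n" using v by (simp add: y_def)
  have yi: "\<And>i. i < n \<Longrightarrow> y $ i = v $ i - (if i = 0 then 1 else 0)"
    using v by (simp add: y_def unit_vec_def)
  have "\<exists>k<n. y $ k \<noteq> 0"
  proof (rule ccontr)
    assume "\<not> (\<exists>k<n. y $ k \<noteq> 0)"
    then have "\<And>i. i < n \<Longrightarrow> v $ i = unit_vec n 0 $ i" using yi by (simp add: unit_vec_def)
    then have "v = unit_vec n 0" using v by (intro eq_vecI) auto
    then show False using False by simp
  qed
  then obtain k where k: "k < n" "y $ k \<noteq> 0" by blast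
  define s where "s = (\<Sum>i<n. y$i * y$i)"
  have s_def': "s = y \<bullet> y" using y by (simp add: s_def scalar_prod_def lessThan_atLeast0)
  have s0: "s > 0" unfolding s_def by (rule sum_pos2[of _ k], insert k, auto simp: zero_less_mult_iff)
  have vv': "(\<Sum>i<n. v$i * v$i) = 1" using vv v by (simp add: scalar_prod_def lessThan_atLeast0)
  have "s = (\<Sum>i<n. v$i * v$i) - 2 * v $ 0 + 1"
  proof -
    have "s = (\<Sum>i<n. v$i * v$i - 2 * (if i = 0 then v$i else 0) + (if i = 0 then 1 else 0))"
      unfolding s_def by (intro sum.cong refl, simp add: yi algebra_simps)
    also have "\<dots> = (\<Sum>i<n. v$i * v$i) - 2 * v $ 0 + 1"
      using n by (simp add: sum.distrib sum_subtractf sum_distrib_left[symmetric])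
    finally show ?thesis .
  qed
  then have s2: "s = 2 - 2 * v $ 0" using vv' by simp
  define c where "c = 2 / s"
  define H where "H = mat n n (\<lambda>(i,j). (if i = j then 1 else 0) - c * y$i * y$j)"
  have H: "H \<in> carrier_mat n n" by (simp add: H_def)
  have Ht: "transpose_mat H = H" unfolding H_def by (rule eq_matI, auto simp: mult.commute)
  have HH: "H * H = 1\<^sub>m n"
  proof (rule eq_matI)
    fix i j assume i: "i < dim_row (1\<^sub>m n)" and j: "j < dim_col (1\<^sub>m n)"
    then have i: "i < n" and j: "j < n" by auto
    have "(H * H) $$ (i,j) = (\<Sum>k<n. ((if i = k then 1 else 0) - c * y$i * y$k) * ((if k = j then 1 else 0) - c * y$k * y$j))"
      using i j by (simp add: H_def scalar_prod_def lessThan_atLeast0)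
    also have "\<dots> = (\<Sum>k<n. (if i = k then (if k = j then 1 else 0) else 0)
       - (if i = k then c * y$k * y$j else 0) - (if k = j then c * y$i * y$k else 0)
       + (c * c * y$i * y$j) * (y$k * y$k))"
      by (intro sum.cong refl, auto simp: algebra_simps)
    also have "\<dots> = (\<Sum>k<n. (if i = k then (if k = j then 1 else 0) else 0))
       - (\<Sum>k<n. (if i = k then c * y$k * y$j else 0)) - (\<Sum>k<n. (if k = j then c * y$i * y$k else 0))
       + (c * c * y$i * y$j) * (\<Sum>k<n. y$k * y$k)"
      by (simp only: sum.distrib sum_subtractf sum_distrib_left)
    also have "\<dots> = (if i = j then 1 else 0) - c * y$i * y$j - c * y$i * y$j + (c * c * s) * y$i * y$j"
      using i j unfolding s_def by simp
    also have "c * c * s = 2 * c" unfolding c_def using s0 by (simp add: field_simps)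
    finally show "(H * H) $$ (i,j) = 1\<^sub>m n $$ (i,j)" using i j by (simp add: algebra_simps)
  qed (auto simp: H_def)
  have col: "\<forall>i<n. H $$ (i,0) = v $ i"
  proof (intro allI impI)
    fix i assume i: "i < n"
    have y0: "y $ 0 = v $ 0 - 1" using yi n by simp
    have cy0: "c * y $ 0 = -1" unfolding c_def s2 y0 using s0 s2
      by (simp add: field_simps)
    have "H $$ (i,0) = (if i = 0 then 1 else 0) - (c * y $ 0) * y $ i" using i n
      unfolding H_def by (simp add: mult.commute mult.left_commute)
    then have "H $$ (i,0) = (if i = 0 then 1 else 0) + y $ i" unfolding cy0 by simp
    then show "H $$ (i,0) = v $ i" using yi[OF i] by simp
  qed
  show ?thesis by (rule exI[of _ H], insert H Ht HH col, auto)
qed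

lemma spectral_theorem:
  fixes A :: "real mat"
  assumes "A \<in> carrier_mat n n" "transpose_mat A = A"
  shows "\<exists>Q D. Q \<in> carrier_mat n n \<and> D \<in> carrier_mat n n \<and> transpose_mat Q * Q = 1\<^sub>m n \<and>
     Q * transpose_mat Q = 1\<^sub>m n \<and> diagonal_mat D \<and> A = Q * D * transpose_mat Q"
  using assms
proof (induction n arbitrary: A)
  case 0
  show ?case
    by (rule exI[of _ "1\<^sub>m 0"], rule exI[of _ "1\<^sub>m 0"], insert 0, auto simp: diagonal_mat_def intro!: eq_matI)
next
  case (Suc m)
  note A = Suc.prems(1) and sym = Suc.prems(2)
  obtain e where "eigenvalue A e" using sym_real_eigenvalue[OF A sym] by auto
  then have "eigenvector A (find_eigenvector A e) e" by (rule find_eigenvector[OF A])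
  then obtain x where x: "x \<in> carrier_vec (Suc m)" "x \<noteq> 0\<^sub>v (Suc m)" "A *\<^sub>v x = e \<cdot>\<^sub>v x"
    using A unfolding eigenvector_def by auto
  have xx: "x \<bullet> x > 0"
  proof -
    have "\<exists>k<Suc m. x $ k \<noteq> 0"
    proof (rule ccontr)
      assume "\<not> (\<exists>k<Suc m. x $ k \<noteq> 0)"
      then have "x = 0\<^sub>v (Suc m)" using x(1) by (intro eq_vecI) auto
      then show False using x(2) by simp
    qed
    then obtain k where k: "k < Suc m" "x $ k \<noteq> 0" by blast
    have "(\<Sum>i\<in>{0..<Suc m}. x $ i * x $ i) > 0"
      by (rule sum_pos2[of _ k], insert k, auto simp: zero_less_mult_iff)
    then show ?thesis using x(1) by (simp add: scalar_prod_def)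
  qed
  define v where "v = (1 / sqrt (x \<bullet> x)) \<cdot>\<^sub>v x"
  have v: "v \<in> carrier_vec (Suc m)" using x(1) by (simp add: v_def)
  have vv: "v \<bullet> v = 1" unfolding v_def using x(1) xx
    by (simp add: smult_scalar_prod_distrib scalar_prod_smult_distrib)
  have Av: "A *\<^sub>v v = e \<cdot>\<^sub>v v" unfolding v_def using x A
    by (simp add: mult_mat_vec smult_smult_assoc mult.commute)
  obtain Q1 where Q1: "Q1 \<in> carrier_mat (Suc m) (Suc m)" and Q1Q1: "transpose_mat Q1 * Q1 = 1\<^sub>m (Suc m)"
    and Q1v: "\<forall>i<Suc m. Q1 $$ (i,0) = v $ i"
    using householder_exists[OF v vv] by auto
  have Q1t: "transpose_mat Q1 \<in> carrier_mat (Suc m) (Suc m)" using Q1 by simp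
  have Q1Q1': "Q1 * transpose_mat Q1 = 1\<^sub>m (Suc m)"
    by (rule mat_mult_left_right_inverse[OF Q1t Q1 Q1Q1])
  define B where "B = transpose_mat Q1 * A * Q1"
  have B: "B \<in> carrier_mat (Suc m) (Suc m)" using Q1 A by (simp add: B_def)
  have QA: "transpose_mat Q1 * A \<in> carrier_mat (Suc m) (Suc m)" using Q1 A by simp
  have "transpose_mat B = transpose_mat Q1 * transpose_mat (transpose_mat Q1 * A)"
    unfolding B_def by (rule transpose_mult[OF QA Q1])
  also have "transpose_mat (transpose_mat Q1 * A) = transpose_mat A * Q1"
    using transpose_mult[OF Q1t A] by simp
  also have "transpose_mat Q1 * (transpose_mat A * Q1) = B"
    unfolding B_def sym using Q1t A Q1 by (simp add: assoc_mult_mat)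
  finally have Bsym: "transpose_mat B = B" .
  define e0 :: "real vec" where "e0 = unit_vec (Suc m) 0"
  have Q1e0: "Q1 *\<^sub>v e0 = v"
    by (rule eq_vecI, insert Q1 Q1v v, auto simp: e0_def scalar_prod_right_unit)
  have "B *\<^sub>v e0 = transpose_mat Q1 *\<^sub>v (A *\<^sub>v (Q1 *\<^sub>v e0))"
    unfolding B_def using Q1 A QA
    by (simp only: assoc_mult_mat_vec[OF QA Q1] assoc_mult_mat_vec[OF Q1t A] e0_def unit_vec_carrier mult_mat_vec_carrier)
  also have "\<dots> = e \<cdot>\<^sub>v (transpose_mat Q1 *\<^sub>v (Q1 *\<^sub>v e0))"
    unfolding Q1e0 Av using Q1 v by (simp add: mult_mat_vec)
  also have "transpose_mat Q1 *\<^sub>v (Q1 *\<^sub>v e0) = e0"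
    using Q1 by (simp add: assoc_mult_mat_vec[symmetric, of _ "Suc m" "Suc m"] Q1Q1 e0_def)
  finally have Be0: "B *\<^sub>v e0 = e \<cdot>\<^sub>v e0" .
  have Bcol: "\<And>i. i < Suc m \<Longrightarrow> B $$ (i,0) = (if i = 0 then e else 0)"
  proof -
    fix i assume i: "i < Suc m"
    have "(B *\<^sub>v e0) $ i = B $$ (i,0)" using B i by (simp add: e0_def scalar_prod_right_unit)
    then show "B $$ (i,0) = (if i = 0 then e else 0)" using Be0 i by (cases "i = 0", auto simp: e0_def)
  qed
  have Brow: "\<And>j. j < Suc m \<Longrightarrow> B $$ (0,j) = (if j = 0 then e else 0)"
    by (metis B Bcol Bsym carrier_matD index_transpose_mat(1) zero_less_Suc)
  define B3 where "B3 = mat m m (\<lambda>(i,j). B $$ (Suc i, Suc j))"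
  have B3: "B3 \<in> carrier_mat m m" by (simp add: B3_def)
  have B3sym: "transpose_mat B3 = B3" unfolding B3_def
    by (rule eq_matI, auto, metis B Bsym Suc_mono carrier_matD index_transpose_mat(1))
  obtain Q3 D3 where Q3: "Q3 \<in> carrier_mat m m" and D3: "D3 \<in> carrier_mat m m"
    and Q3Q3: "transpose_mat Q3 * Q3 = 1\<^sub>m m" and Q3Q3': "Q3 * transpose_mat Q3 = 1\<^sub>m m"
    and D3d: "diagonal_mat D3" and B3eq: "B3 = Q3 * D3 * transpose_mat Q3"
    using Suc.IH[OF B3 B3sym] by blast
  define E where "E = mat 1 1 (\<lambda>_. e)"
  have E: "E \<in> carrier_mat 1 1" by (simp add: E_def)
  define Q2 where "Q2 = four_block_mat (1\<^sub>m 1) (0\<^sub>m 1 m) (0\<^sub>m m 1) Q3"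
  define D where "D = four_block_mat E (0\<^sub>m 1 m) (0\<^sub>m m 1) D3"
  have Q2: "Q2 \<in> carrier_mat (Suc m) (Suc m)" using four_block_carrier_mat[OF one_carrier_mat Q3, of 1] by (simp add: Q2_def)
  have D: "D \<in> carrier_mat (Suc m) (Suc m)" using four_block_carrier_mat[OF E D3] by (simp add: D_def)
  have Q2t: "transpose_mat Q2 = four_block_mat (1\<^sub>m 1) (0\<^sub>m 1 m) (0\<^sub>m m 1) (transpose_mat Q3)"
    unfolding Q2_def using Q3 by (simp add: transpose_four_block_mat[OF one_carrier_mat zero_carrier_mat zero_carrier_mat Q3])
  have Q3t: "transpose_mat Q3 \<in> carrier_mat m m" using Q3 by simp
  note mfb = mult_four_block_mat[OF one_carrier_mat zero_carrier_mat zero_carrier_mat _ one_carrier_mat zero_carrier_mat zero_carrier_mat]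
  note mfb' = mult_four_block_mat[OF E zero_carrier_mat zero_carrier_mat _ one_carrier_mat zero_carrier_mat zero_carrier_mat]
  note mfb'' = mult_four_block_mat[OF one_carrier_mat zero_carrier_mat zero_carrier_mat _ E zero_carrier_mat zero_carrier_mat]
  have Q2Q2: "transpose_mat Q2 * Q2 = 1\<^sub>m (Suc m)"
    unfolding Q2t unfolding Q2_def using Q3
    by (simp add: mfb[OF Q3t Q3] Q3Q3 four_block_one_mat[of 1 m, simplified])
  have Q2Q2': "Q2 * transpose_mat Q2 = 1\<^sub>m (Suc m)"
    unfolding Q2t unfolding Q2_def using Q3
    by (simp add: mfb[OF Q3 Q3t] Q3Q3' four_block_one_mat[of 1 m, simplified])
  have Q2D: "Q2 * D = four_block_mat E (0\<^sub>m 1 m) (0\<^sub>m m 1) (Q3 * D3)"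
    unfolding Q2_def D_def by (subst mfb''[OF Q3 D3]) (use E Q3 D3 in simp)
  have QD3: "Q3 * D3 \<in> carrier_mat m m" using Q3 D3 by simp
  have "Q2 * D * transpose_mat Q2 = four_block_mat E (0\<^sub>m 1 m) (0\<^sub>m m 1) (Q3 * D3 * transpose_mat Q3)"
    unfolding Q2D Q2t by (subst mfb'[OF QD3 Q3t]) (use E Q3 D3 in simp)
  also have "\<dots> = B"
    unfolding B3eq[symmetric]
    by (rule eq_matI, insert B Bcol Brow, auto simp: B3_def E_def)
  finally have BQ2: "B = Q2 * D * transpose_mat Q2" by simp
  have Dd: "diagonal_mat D" using D3d D3 unfolding D_def diagonal_mat_def E_def
    by auto
  define Q where "Q = Q1 * Q2"
  have Q: "Q \<in> carrier_mat (Suc m) (Suc m)" using Q1 Q2 by (simp add: Q_def)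
  have Qt: "transpose_mat Q = transpose_mat Q2 * transpose_mat Q1"
    unfolding Q_def by (rule transpose_mult[OF Q1 Q2])
  have Q2t': "transpose_mat Q2 \<in> carrier_mat (Suc m) (Suc m)" using Q2 by simp
  have as: "\<And>X Y Z. X \<in> carrier_mat (Suc m) (Suc m) \<Longrightarrow> Y \<in> carrier_mat (Suc m) (Suc m) \<Longrightarrow>
     Z \<in> carrier_mat (Suc m) (Suc m) \<Longrightarrow> X * Y * Z = X * (Y * Z)"
    by (rule assoc_mult_mat)
  have "transpose_mat Q * Q = transpose_mat Q2 * (transpose_mat Q1 * Q1) * Q2"
    unfolding Qt unfolding Q_def using Q1 Q2 Q1t Q2t'
    by (simp add: as)
  then have QQ: "transpose_mat Q * Q = 1\<^sub>m (Suc m)" using Q2 Q2Q2 by (simp add: Q1Q1)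
  have "Q * transpose_mat Q = Q1 * (Q2 * transpose_mat Q2) * transpose_mat Q1"
    unfolding Qt unfolding Q_def using Q1 Q2 Q1t Q2t'
    by (simp add: as)
  then have QQ': "Q * transpose_mat Q = 1\<^sub>m (Suc m)" using Q1 Q2Q2' by (simp add: Q1Q1')
  have "A = (Q1 * transpose_mat Q1) * A * (Q1 * transpose_mat Q1)"
    using A by (simp add: Q1Q1')
  also have "\<dots> = Q1 * B * transpose_mat Q1"
    unfolding B_def using Q1 A Q1t by (simp add: as)
  also have "\<dots> = Q * D * transpose_mat Q"
    unfolding BQ2 Qt unfolding Q_def using Q1 Q2 D Q1t Q2t' by (simp add: as)
  finally have "A = Q * D * transpose_mat Q" .
  then show ?case using Q D QQ QQ' Dd by blast
qed

lemma eigs_desc_diag: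
  fixes A :: "real mat"
  assumes A: "A \<in> carrier_mat n n" and Q: "Q \<in> carrier_mat n n" and D: "D \<in> carrier_mat n n"
    and QQ: "transpose_mat Q * Q = 1\<^sub>m n" and QQ': "Q * transpose_mat Q = 1\<^sub>m n"
    and Dd: "diagonal_mat D" and AQ: "A = Q * D * transpose_mat Q"
  shows "eigs_desc A = rev (sort (diag_mat D))"
proof -
  have "similar_mat_wit A D Q (transpose_mat Q)"
    unfolding similar_mat_wit_def Let_def using A Q D QQ QQ' AQ by auto
  then have "similar_mat A D" unfolding similar_mat_def by blast
  then have "char_poly A = char_poly D" by (rule char_poly_similar)
  also have "upper_triangular D" using Dd D unfolding diagonal_mat_def upper_triangular_def by auto
  then have "char_poly D = (\<Prod>a\<leftarrow>diag_mat D. [:- a, 1:])" by (rule char_poly_upper_triangular[OF D])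
  finally have cp: "char_poly A = (\<Prod>a\<leftarrow>diag_mat D. [:- a, 1:])" .
  have pr: "\<And>xs :: real list. proots (\<Prod>a\<leftarrow>xs. [:- a, 1:]) = mset xs"
  proof -
    fix xs :: "real list"
    show "proots (\<Prod>a\<leftarrow>xs. [:- a, 1:]) = mset xs"
    proof (induction xs)
      case (Cons a xs)
      have ne: "(\<Prod>a\<leftarrow>xs. [:- a, 1:]) \<noteq> (0 :: real poly)"
        by (auto simp: prod_list_zero_iff)
      have "proots (\<Prod>a\<leftarrow>a#xs. [:- a, 1:]) = proots ([:-a,1:] * (\<Prod>a\<leftarrow>xs. [:- a, 1:]))" by simp
      also have "\<dots> = proots [:-a,1:] + proots (\<Prod>a\<leftarrow>xs. [:- a, 1:])"
        by (rule proots_mult[OF _ ne], simp)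
      also have "proots [:-a,1:] = {#a#}" using proots_linear_factor[of "-a"] by simp
      finally show ?case using Cons by simp
    qed simp
  qed
  show ?thesis unfolding eigs_desc_def cp pr by simp
qed

lemma quad_diag:
  fixes D :: "real mat"
  assumes D: "D \<in> carrier_mat n n" and Dd: "diagonal_mat D" and y: "y \<in> carrier_vec n"
  shows "y \<bullet> (D *\<^sub>v y) = (\<Sum>k<n. D $$ (k,k) * (y $ k)^2)"
proof -
  have "\<And>k. k < n \<Longrightarrow> (D *\<^sub>v y) $ k = D $$ (k,k) * y $ k"
  proof -
    fix k assume k: "k < n"
    have "(D *\<^sub>v y) $ k = (\<Sum>j\<in>{0..<n}. D $$ (k,j) * y $ j)"
      using D y k by (simp add: scalar_prod_def)
    also have "\<dots> = (\<Sum>j\<in>{0..<n}. if j = k then D $$ (k,k) * y $ k else 0)"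
      using Dd D k unfolding diagonal_mat_def by (intro sum.cong refl) auto
    also have "\<dots> = D $$ (k,k) * y $ k" using k by simp
    finally show "(D *\<^sub>v y) $ k = D $$ (k,k) * y $ k" .
  qed
  then show ?thesis using D y
    by (simp add: scalar_prod_def lessThan_atLeast0 power2_eq_square mult.commute mult.left_commute)
qed

lemma spectral_data:
  fixes A :: "real mat"
  assumes A: "A \<in> carrier_mat n n" "transpose_mat A = A"
  obtains Q D where "Q \<in> carrier_mat n n" "D \<in> carrier_mat n n" "transpose_mat Q * Q = 1\<^sub>m n"
     "Q * transpose_mat Q = 1\<^sub>m n" "diagonal_mat D" "A = Q * D * transpose_mat Q"
     "eigs_desc A = rev (sort (diag_mat D))"
  using spectral_theorem[OF A] eigs_desc_diag[OF A(1)] by metis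

lemma lambda_sort:
  assumes "eigs_desc A = rev (sort ds)" "length ds = n" "1 \<le> k" "k \<le> n"
  shows "lambda A k = sort ds ! (n - k)"
  using assms unfolding lambda_def by (simp add: rev_nth)

lemma min_eigvec:
  fixes A :: "real mat"
  assumes A: "A \<in> carrier_mat n n" "transpose_mat A = A" and n: "n \<ge> 1"
  shows "\<exists>u. u \<in> carrier_vec n \<and> u \<bullet> u = 1 \<and> A *\<^sub>v u = lambda A n \<cdot>\<^sub>v u"
proof -
  obtain Q D where Q: "Q \<in> carrier_mat n n" and D: "D \<in> carrier_mat n n"
    and QQ: "transpose_mat Q * Q = 1\<^sub>m n" and QQ': "Q * transpose_mat Q = 1\<^sub>m n"
    and Dd: "diagonal_mat D" and AQ: "A = Q * D * transpose_mat Q"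
    and ed: "eigs_desc A = rev (sort (diag_mat D))"
    using spectral_data[OF A] by blast
  define ds where "ds = diag_mat D"
  have lds: "length ds = n" using D by (simp add: ds_def diag_mat_def)
  have dsk: "\<And>k. k < n \<Longrightarrow> ds ! k = D $$ (k,k)" using D by (simp add: ds_def diag_mat_def)
  have "lambda A n = sort ds ! 0" using lambda_sort[OF ed[folded ds_def] lds n] by simp
  moreover have "sort ds ! 0 \<in> set (sort ds)" using lds n by (intro nth_mem) simp
  then have "sort ds ! 0 \<in> set ds" by simp
  then obtain k where "k < n" "ds ! k = sort ds ! 0" using lds by (auto simp: in_set_conv_nth)
  ultimately obtain k where k: "k < n" "D $$ (k,k) = lambda A n"
    using dsk by auto
  define ek :: "real vec" where "ek = unit_vec n k"
  have ek: "ek \<in> carrier_vec n" by (simp add: ek_def)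
  define u where "u = Q *\<^sub>v ek"
  have u: "u \<in> carrier_vec n" using Q by (simp add: u_def ek_def)
  have Qt: "transpose_mat Q \<in> carrier_mat n n" using Q by simp
  have Qtu: "transpose_mat Q *\<^sub>v u = ek"
    unfolding u_def using Q Qt ek by (simp add: assoc_mult_mat_vec[symmetric, OF Qt Q ek] QQ)
  have Dek: "D *\<^sub>v ek = D $$ (k,k) \<cdot>\<^sub>v ek"
    by (rule eq_vecI, insert D Dd k, auto simp: ek_def scalar_prod_right_unit diagonal_mat_def)
  have "A *\<^sub>v u = Q *\<^sub>v (D *\<^sub>v (transpose_mat Q *\<^sub>v u))"
    unfolding AQ using Q D Qt u
    by (simp add: assoc_mult_mat_vec[of _ n n _ n])
  also have "\<dots> = D $$ (k,k) \<cdot>\<^sub>v u" unfolding Qtu unfolding Dek unfolding u_def using Q ek by (simp add: mult_mat_vec)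
  finally have Au: "A *\<^sub>v u = lambda A n \<cdot>\<^sub>v u" using k by simp
  have "u \<bullet> u = (transpose_mat Q *\<^sub>v u) \<bullet> ek"
    using transpose_vec_mult_scalar[OF Q ek u] by (simp add: u_def)
  also have "\<dots> = 1" unfolding Qtu using k by (simp add: ek_def)
  finally show ?thesis using u Au by blast
qed

lemma sorted_filter_le1:
  fixes s :: "real list"
  assumes "sorted s" "length s \<ge> 2" "s ! 1 \<ge> \<mu>"
  shows "length (filter (\<lambda>d. d < \<mu>) s) \<le> 1"
proof -
  have "{i. i < length s \<and> s ! i < \<mu>} \<subseteq> {0}"
  proof
    fix i assume i: "i \<in> {i. i < length s \<and> s ! i < \<mu>}"
    show "i \<in> {0}"
    proof (rule ccontr)
      assume "i \<notin> {0}"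
      then have "1 \<le> i" by simp
      then have "s ! 1 \<le> s ! i" using assms(1) i by (intro sorted_nth_mono) auto
      then show False using i assms(3) by simp
    qed
  qed
  then have "card {i. i < length s \<and> s ! i < \<mu>} \<le> card {0::nat}" by (intro card_mono) auto
  then show ?thesis by (simp add: length_filter_conv_card)
qed

lemma lambda_second_lt:
  fixes A :: "real mat"
  assumes A: "A \<in> carrier_mat n n" "transpose_mat A = A" and n: "n \<ge> 2"
    and a: "a \<in> carrier_vec n" and b: "b \<in> carrier_vec n"
    and aa: "a \<bullet> a = 1" and bb: "b \<bullet> b = 1" and ab: "a \<bullet> b = 0"
    and neg: "\<And>\<alpha> \<beta>. (\<alpha>, \<beta>) \<noteq> (0, 0) \<Longrightarrow>
       (\<alpha> \<cdot>\<^sub>v a + \<beta> \<cdot>\<^sub>v b) \<bullet> (A *\<^sub>v (\<alpha> \<cdot>\<^sub>v a + \<beta> \<cdot>\<^sub>v b)) < \<mu> * (\<alpha>\<^sup>2 + \<beta>\<^sup>2)"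
  shows "lambda A (n - 1) < \<mu>"
proof (rule ccontr)
  assume "\<not> lambda A (n - 1) < \<mu>"
  then have ge: "lambda A (n - 1) \<ge> \<mu>" by simp
  obtain Q D where Q: "Q \<in> carrier_mat n n" and D: "D \<in> carrier_mat n n"
    and QQ: "transpose_mat Q * Q = 1\<^sub>m n" and QQ': "Q * transpose_mat Q = 1\<^sub>m n"
    and Dd: "diagonal_mat D" and AQ: "A = Q * D * transpose_mat Q"
    and ed: "eigs_desc A = rev (sort (diag_mat D))"
    using spectral_data[OF A] by blast
  define ds where "ds = diag_mat D"
  have lds: "length ds = n" using D by (simp add: ds_def diag_mat_def)
  have dsk: "\<And>k. k < n \<Longrightarrow> ds ! k = D $$ (k,k)" using D by (simp add: ds_def diag_mat_def)
  have "lambda A (n - 1) = sort ds ! 1" using lambda_sort[OF ed[folded ds_def] lds, of "n - 1"] n by simp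
  then have "length (filter (\<lambda>d. d < \<mu>) (sort ds)) \<le> 1"
    using ge lds n by (intro sorted_filter_le1) auto
  moreover have "length (filter (\<lambda>d. d < \<mu>) (sort ds)) = length (filter (\<lambda>d. d < \<mu>) ds)"
    by (metis mset_filter mset_sort size_mset)
  ultimately have "card {k. k < n \<and> ds ! k < \<mu>} \<le> 1" using lds by (simp add: length_filter_conv_card)
  then have cS: "card {k. k < n \<and> D $$ (k,k) < \<mu>} \<le> 1"
    by (smt (verit, best) Collect_cong dsk)
  have "\<exists>k0<n. \<forall>k<n. k \<noteq> k0 \<longrightarrow> \<mu> \<le> D $$ (k,k)"
  proof (cases "{k. k < n \<and> D $$ (k,k) < \<mu>} = {}")
    case True
    then show ?thesis using n by (intro exI[of _ 0]) auto
  next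
    case False
    then obtain k0 where k0: "k0 < n" "D $$ (k0,k0) < \<mu>" by auto
    have fin: "finite {k. k < n \<and> D $$ (k,k) < \<mu>}" by simp
    have "\<forall>k<n. k \<noteq> k0 \<longrightarrow> \<mu> \<le> D $$ (k,k)"
    proof (intro allI impI, rule ccontr)
      fix k assume k: "k < n" "k \<noteq> k0" "\<not> \<mu> \<le> D $$ (k,k)"
      then have "{k, k0} \<subseteq> {k. k < n \<and> D $$ (k,k) < \<mu>}" using k0 by auto
      then have "card {k, k0} \<le> 1" using card_mono[OF fin] cS by (meson le_trans)
      then show False using k by simp
    qed
    then show ?thesis using k0 by blast
  qed
  then obtain k0 where k0: "k0 < n" and dge: "\<And>k. k < n \<Longrightarrow> k \<noteq> k0 \<Longrightarrow> \<mu> \<le> D $$ (k,k)" by blast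
  have Qt: "transpose_mat Q \<in> carrier_mat n n" using Q by simp
  define ya where "ya = transpose_mat Q *\<^sub>v a"
  define yb where "yb = transpose_mat Q *\<^sub>v b"
  define \<alpha> where "\<alpha> = (if ya $ k0 = 0 \<and> yb $ k0 = 0 then 1 else yb $ k0)"
  define \<beta> where "\<beta> = (if ya $ k0 = 0 \<and> yb $ k0 = 0 then 0 else - ya $ k0)"
  have ab0: "(\<alpha>, \<beta>) \<noteq> (0, 0)" unfolding \<alpha>_def \<beta>_def by auto
  define x where "x = \<alpha> \<cdot>\<^sub>v a + \<beta> \<cdot>\<^sub>v b"
  have x: "x \<in> carrier_vec n" using a b by (simp add: x_def)
  define y where "y = transpose_mat Q *\<^sub>v x"
  have y: "y \<in> carrier_vec n" unfolding y_def using mult_mat_vec_carrier[OF Qt x] .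
  have "y = \<alpha> \<cdot>\<^sub>v ya + \<beta> \<cdot>\<^sub>v yb" unfolding y_def x_def ya_def yb_def using Qt a b
    by (simp add: mult_add_distrib_mat_vec mult_mat_vec)
  then have yk0: "y $ k0 = 0" using k0 Qt unfolding \<alpha>_def \<beta>_def ya_def yb_def
    by (auto simp: algebra_simps)
  have "x \<bullet> (A *\<^sub>v x) = x \<bullet> (Q *\<^sub>v (D *\<^sub>v y))"
    unfolding AQ y_def using Q D Qt x by (simp add: assoc_mult_mat_vec[of _ n n _ n])
  also have "\<dots> = y \<bullet> (D *\<^sub>v y)"
    unfolding y_def using transpose_vec_mult_scalar[OF Q _ x, of "D *\<^sub>v (transpose_mat Q *\<^sub>v x)"] D Qt x
    by simp
  also have "\<dots> = (\<Sum>k<n. D $$ (k,k) * (y $ k)^2)" by (rule quad_diag[OF D Dd y])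
  also have "\<dots> \<ge> (\<Sum>k<n. \<mu> * (y $ k)^2)"
  proof (rule sum_mono)
    fix k assume "k \<in> {..<n}"
    then show "\<mu> * (y $ k)^2 \<le> D $$ (k,k) * (y $ k)^2"
      using dge[of k] yk0 by (cases "k = k0") (auto intro: mult_right_mono)
  qed
  finally have ge1: "x \<bullet> (A *\<^sub>v x) \<ge> \<mu> * (y \<bullet> y)"
    using y by (simp add: scalar_prod_def sum_distrib_left lessThan_atLeast0 power2_eq_square)
  have "y \<bullet> y = x \<bullet> (Q *\<^sub>v y)" unfolding y_def using transpose_vec_mult_scalar[OF Q _ x] Qt x by simp
  also have "Q *\<^sub>v y = x" unfolding y_def using Q Qt x
    by (simp add: assoc_mult_mat_vec[symmetric, OF Q Qt x] QQ')
  finally have yy: "y \<bullet> y = x \<bullet> x" .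
  have "x \<bullet> x = \<alpha>\<^sup>2 + \<beta>\<^sup>2" unfolding x_def using a b aa bb ab
    by (simp add: add_scalar_prod_distrib scalar_prod_add_distrib[of _ n] comm_scalar_prod[of b n a] power2_eq_square)
  then have "x \<bullet> (A *\<^sub>v x) \<ge> \<mu> * (\<alpha>\<^sup>2 + \<beta>\<^sup>2)" using ge1 yy by simp
  moreover have "x \<bullet> (A *\<^sub>v x) < \<mu> * (\<alpha>\<^sup>2 + \<beta>\<^sup>2)" unfolding x_def by (rule neg[OF ab0])
  ultimately show False by simp
qed

lemma quad_neg:
  fixes P C R a b :: real
  assumes P: "P < 0" and D: "P * R - C^2 > 0" and ab: "(a, b) \<noteq> (0, 0)"
  shows "P * a^2 + 2 * C * a * b + R * b^2 < 0"
proof -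
  have id: "P * (P * a^2 + 2 * C * a * b + R * b^2) = (P * a + C * b)^2 + (P * R - C^2) * b^2"
    by (simp add: algebra_simps power2_eq_square)
  have "(P * a + C * b)^2 + (P * R - C^2) * b^2 > 0"
  proof (cases "b = 0")
    case True
    then have "a \<noteq> 0" using ab by auto
    then show ?thesis using True P by simp
  next
    case False
    then have "(P * R - C^2) * b^2 > 0" using D by simp
    then show ?thesis using zero_le_power2[of "P * a + C * b"] by linarith
  qed
  then have "P * (P * a^2 + 2 * C * a * b + R * b^2) > 0" using id by simp
  then show ?thesis using P by (simp add: zero_less_mult_iff)
qed

lemma small_pert:
  fixes d h p q r a b :: real
  assumes d: "d > 0" and hr: "h * r < 0"
    and s1: "\<bar>h\<bar> * 2 * (\<bar>p\<bar> + 1) \<le> d" and s2: "\<bar>h\<bar> * 2 * (q^2 + 1) < d * \<bar>r\<bar>"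
    and ab: "(a, b) \<noteq> (0, 0)"
  shows "(- d + h * p) * a^2 + 2 * (h * q) * a * b + (h * r) * b^2 < 0"
proof (rule quad_neg[OF _ _ ab])
  have "\<bar>h\<bar> * \<bar>p\<bar> \<le> \<bar>h\<bar> * (\<bar>p\<bar> + 1)" by (intro mult_left_mono) auto
  then have "\<bar>h * p\<bar> \<le> d / 2" using s1 by (simp add: abs_mult)
  then show P: "- d + h * p < 0" using d by linarith
  have h0: "h \<noteq> 0" using hr by auto
  have "(- d + h * p) * (h * r) \<ge> (d / 2) * \<bar>h * r\<bar>"
  proof -
    have "- (- d + h * p) \<ge> d / 2" using \<open>\<bar>h * p\<bar> \<le> d / 2\<close> by linarith
    then have "(- (- d + h * p)) * \<bar>h * r\<bar> \<ge> (d / 2) * \<bar>h * r\<bar>" by (intro mult_right_mono) auto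
    moreover have "\<bar>h * r\<bar> = - (h * r)" using hr by simp
    ultimately show ?thesis by (simp add: algebra_simps)
  qed
  moreover have "(d / 2) * \<bar>h * r\<bar> > (h * q)^2"
  proof -
    have hp: "\<bar>h\<bar> > 0" using h0 by simp
    have "(h * q)^2 = \<bar>h\<bar> * (\<bar>h\<bar> * q^2)" by (simp add: power2_eq_square abs_mult_self_eq)
    also have "\<dots> < \<bar>h\<bar> * (d * \<bar>r\<bar> / 2)"
    proof (rule mult_strict_left_mono[OF _ hp])
      have "\<bar>h\<bar> * q^2 \<le> \<bar>h\<bar> * (q^2 + 1)" by (intro mult_left_mono) auto
      then show "\<bar>h\<bar> * q^2 < d * \<bar>r\<bar> / 2" using s2 by (simp add: algebra_simps)
    qed
    also have "\<dots> = (d / 2) * \<bar>h * r\<bar>" by (simp add: abs_mult)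
    finally show ?thesis .
  qed
  ultimately show "(- d + h * p) * (h * r) - (h * q)^2 > 0" by linarith
qed

lemma qf_sum:
  fixes A :: "real mat"
  assumes A: "A \<in> carrier_mat n n" and x: "x \<in> carrier_vec n"
  shows "x \<bullet> (A *\<^sub>v x) = (\<Sum>k<n. \<Sum>l<n. x$k * A$$(k,l) * x$l)"
  using A x by (simp add: scalar_prod_def lessThan_atLeast0 sum_distrib_left mult.assoc)

lemma double_delta:
  fixes c :: real and i j n :: nat
  assumes "i < n" "j < n"
  shows "(\<Sum>k<n. \<Sum>l<n. if k = i \<and> l = j then c else 0) = c"
proof -
  have "(\<Sum>k<n. \<Sum>l<n. if k = i \<and> l = j then c else 0) = (\<Sum>k<n. if k = i then c else 0)"
  proof (intro sum.cong refl)
    fix k assume "k \<in> {..<n}"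
    show "(\<Sum>l<n. if k = i \<and> l = j then c else 0) = (if k = i then c else 0)"
      using assms by (cases "k = i") (simp_all add: sum.delta)
  qed
  also have "\<dots> = c" using assms by (simp add: sum.delta)
  finally show ?thesis .
qed

lemma quad_update:
  fixes M :: "real mat"
  assumes M: "M \<in> carrier_mat n n" and i: "i < n" and j: "j < n" and x: "x \<in> carrier_vec n"
    and sym: "M $$ (j,i) = M $$ (i,j)"
  shows "x \<bullet> (mat n n (\<lambda>(k,l). if (k = i \<and> l = j) \<or> (k = j \<and> l = i) then c else M $$ (k,l)) *\<^sub>v x)
     = x \<bullet> (M *\<^sub>v x) + (c - M$$(i,j)) * (if i = j then x$i * x$i else 2 * x$i * x$j)"
proof -
  define M' where "M' = mat n n (\<lambda>(k,l). if (k = i \<and> l = j) \<or> (k = j \<and> l = i) then c else M $$ (k,l))"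
  define h where "h = c - M$$(i,j)"
  have M': "M' \<in> carrier_mat n n" by (simp add: M'_def)
  have e: "\<And>k l. k < n \<Longrightarrow> l < n \<Longrightarrow> x$k * M'$$(k,l) * x$l = x$k * M$$(k,l) * x$l
      + (if k = i \<and> l = j then h * (x$k * x$l) else 0) + (if k = j \<and> l = i \<and> i \<noteq> j then h * (x$k * x$l) else 0)"
    using sym by (auto simp: M'_def h_def algebra_simps)
  have "x \<bullet> (M' *\<^sub>v x) = (\<Sum>k<n. \<Sum>l<n. x$k * M'$$(k,l) * x$l)" by (rule qf_sum[OF M' x])
  also have "\<dots> = (\<Sum>k<n. \<Sum>l<n. x$k * M$$(k,l) * x$l)
      + (\<Sum>k<n. \<Sum>l<n. (if k = i \<and> l = j then h * (x$k * x$l) else 0))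
      + (\<Sum>k<n. \<Sum>l<n. (if k = j \<and> l = i \<and> i \<noteq> j then h * (x$k * x$l) else 0))"
    by (simp add: e sum.distrib)
  also have "(\<Sum>k<n. \<Sum>l<n. (if k = i \<and> l = j then h * (x$k * x$l) else 0)) = h * (x$i * x$j)"
    using double_delta[OF i j, of "h * (x$i * x$j)"] by (simp cong: if_cong)
  also have "(\<Sum>k<n. \<Sum>l<n. (if k = j \<and> l = i \<and> i \<noteq> j then h * (x$k * x$l) else 0))
      = (if i = j then 0 else h * (x$j * x$i))"
    using i j double_delta[OF j i, of "h * (x$j * x$i)"] by (cases "i = j") (simp_all cong: if_cong)
  finally show ?thesis unfolding M'_def[symmetric] h_def[symmetric] qf_sum[OF M x, symmetric]
    by (simp add: algebra_simps)
qed

lemma qf_span: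
  fixes M :: "real mat"
  assumes M: "M \<in> carrier_mat n n" "transpose_mat M = M"
    and u: "u \<in> carrier_vec n" "u \<bullet> u = 1" "M *\<^sub>v u = p \<cdot>\<^sub>v u"
    and w: "w \<in> carrier_vec n" "w \<bullet> w = 1" "M *\<^sub>v w = q \<cdot>\<^sub>v w"
    and uw: "u \<bullet> w = 0"
  shows "(a \<cdot>\<^sub>v u + b \<cdot>\<^sub>v w) \<bullet> (M *\<^sub>v (a \<cdot>\<^sub>v u + b \<cdot>\<^sub>v w)) = a^2 * p + b^2 * q"
proof -
  have wu: "w \<bullet> u = 0" using uw comm_scalar_prod[OF u(1) w(1)] by simp
  have "M *\<^sub>v (a \<cdot>\<^sub>v u + b \<cdot>\<^sub>v w) = (a * p) \<cdot>\<^sub>v u + (b * q) \<cdot>\<^sub>v w"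
    using M u w by (simp add: mult_add_distrib_mat_vec mult_mat_vec smult_smult_assoc)
  then show ?thesis using u w uw wu
    by (simp add: add_scalar_prod_distrib[of _ n] scalar_prod_add_distrib[of _ n] power2_eq_square algebra_simps)
qed

lemma perturb_contra:
  fixes M :: "real mat"
  assumes M: "M \<in> S n" and n: "n \<ge> 2"
    and minim: "\<forall>M'\<in>S n. lam \<le> lambda M' (n - 1)"
    and u: "u \<in> carrier_vec n" "u \<bullet> u = 1" "M *\<^sub>v u = lamn \<cdot>\<^sub>v u"
    and w: "w \<in> carrier_vec n" "w \<bullet> w = 1" "M *\<^sub>v w = lam \<cdot>\<^sub>v w"
    and uw: "u \<bullet> w = 0" and lt: "lamn < lam"
    and i: "i < n" and j: "j < n"
    and c: "0 \<le> c" "c \<le> 1"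
    and hr: "(c - M$$(i,j)) * (if i = j then w$i * w$i else 2 * w$i * w$j) < 0"
    and s1: "\<bar>c - M$$(i,j)\<bar> * 2 * (\<bar>if i = j then u$i * u$i else 2 * u$i * u$j\<bar> + 1) \<le> lam - lamn"
    and s2: "\<bar>c - M$$(i,j)\<bar> * 2 * ((if i = j then u$i * w$i else u$i * w$j + u$j * w$i)^2 + 1)
       < (lam - lamn) * \<bar>if i = j then w$i * w$i else 2 * w$i * w$j\<bar>"
  shows False
proof -
  have Mc: "M \<in> carrier_mat n n" and Ms: "transpose_mat M = M"
    and M01: "\<And>k l. k < n \<Longrightarrow> l < n \<Longrightarrow> 0 \<le> M $$ (k,l) \<and> M $$ (k,l) \<le> 1"
    using M unfolding S_def by auto
  have Msym: "\<And>k l. k < n \<Longrightarrow> l < n \<Longrightarrow> M $$ (l,k) = M $$ (k,l)"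
    by (metis Mc Ms carrier_matD index_transpose_mat(1))
  define M' where "M' = mat n n (\<lambda>(k,l). if (k = i \<and> l = j) \<or> (k = j \<and> l = i) then c else M $$ (k,l))"
  have M'c: "M' \<in> carrier_mat n n" by (simp add: M'_def)
  have M's: "transpose_mat M' = M'"
    by (rule eq_matI, auto simp: M'_def Msym)
  have M'S: "M' \<in> S n" unfolding S_def using M'c M's c M01 by (auto simp: M'_def)
  define h where "h = c - M$$(i,j)"
  define p where "p = (if i = j then u$i * u$i else 2 * u$i * u$j)"
  define q where "q = (if i = j then u$i * w$i else u$i * w$j + u$j * w$i)"
  define r where "r = (if i = j then w$i * w$i else 2 * w$i * w$j)"
  have "lambda M' (n - 1) < lam"
  proof (rule lambda_second_lt[OF M'c M's n u(1) w(1) u(2) w(2) uw])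
    fix \<alpha> \<beta> :: real assume ab: "(\<alpha>, \<beta>) \<noteq> (0, 0)"
    define z where "z = \<alpha> \<cdot>\<^sub>v u + \<beta> \<cdot>\<^sub>v w"
    have z: "z \<in> carrier_vec n" using u w by (simp add: z_def)
    have zi: "z $ i = \<alpha> * u$i + \<beta> * w$i" "z $ j = \<alpha> * u$j + \<beta> * w$j"
      using u w i j by (auto simp: z_def)
    have "z \<bullet> (M' *\<^sub>v z) = z \<bullet> (M *\<^sub>v z) + h * (if i = j then z$i * z$i else 2 * z$i * z$j)"
      unfolding M'_def h_def by (rule quad_update[OF Mc i j z Msym[OF i j]])
    also have "z \<bullet> (M *\<^sub>v z) = \<alpha>^2 * lamn + \<beta>^2 * lam"
      unfolding z_def by (rule qf_span[OF Mc Ms u w uw])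
    also have "h * (if i = j then z$i * z$i else 2 * z$i * z$j) = (h * p) * \<alpha>^2 + 2 * (h * q) * \<alpha> * \<beta> + (h * r) * \<beta>^2"
      unfolding zi p_def q_def r_def by (cases "i = j") (simp_all add: algebra_simps power2_eq_square)
    finally have eq: "z \<bullet> (M' *\<^sub>v z) = \<alpha>^2 * lamn + \<beta>^2 * lam + ((h * p) * \<alpha>^2 + 2 * (h * q) * \<alpha> * \<beta> + (h * r) * \<beta>^2)" .
    have "(- (lam - lamn) + h * p) * \<alpha>^2 + 2 * (h * q) * \<alpha> * \<beta> + (h * r) * \<beta>^2 < 0"
      by (rule small_pert) (use lt hr s1 s2 ab in \<open>auto simp: h_def p_def q_def r_def\<close>)
    then show "z \<bullet> (M' *\<^sub>v z) < lam * (\<alpha>^2 + \<beta>^2)" unfolding eq by (simp add: algebra_simps)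
  qed
  moreover have "lam \<le> lambda M' (n - 1)" using minim M'S by blast
  ultimately show False by simp
qed

lemma small_h_exists:
  fixes d p q r :: real
  assumes d: "d > 0" and r: "r \<noteq> 0"
  shows "\<exists>t>0. \<forall>h. \<bar>h\<bar> \<le> t \<longrightarrow> \<bar>h\<bar> * 2 * (\<bar>p\<bar> + 1) \<le> d \<and> \<bar>h\<bar> * 2 * (q^2 + 1) < d * \<bar>r\<bar>"
proof -
  define t where "t = min (d / (2 * (\<bar>p\<bar> + 1))) (d * \<bar>r\<bar> / (4 * (q^2 + 1)))"
  have p1: "2 * (\<bar>p\<bar> + 1) > 0" by simp
  have "q^2 + 1 > 0" using zero_le_power2[of q] by linarith
  then have q1: "4 * (q^2 + 1) > 0" by simp
  have dr: "d * \<bar>r\<bar> > 0" using d r by simp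
  have t0: "t > 0" unfolding t_def using d dr p1 q1 by simp
  have "\<forall>h. \<bar>h\<bar> \<le> t \<longrightarrow> \<bar>h\<bar> * 2 * (\<bar>p\<bar> + 1) \<le> d \<and> \<bar>h\<bar> * 2 * (q^2 + 1) < d * \<bar>r\<bar>"
  proof (intro allI impI conjI)
    fix h :: real assume h: "\<bar>h\<bar> \<le> t"
    have "\<bar>h\<bar> \<le> d / (2 * (\<bar>p\<bar> + 1))" using h unfolding t_def by simp
    then have "\<bar>h\<bar> * (2 * (\<bar>p\<bar> + 1)) \<le> d" using p1 by (simp add: pos_le_divide_eq)
    then show "\<bar>h\<bar> * 2 * (\<bar>p\<bar> + 1) \<le> d" by (simp add: mult.assoc)
    have "\<bar>h\<bar> \<le> d * \<bar>r\<bar> / (4 * (q^2 + 1))" using h unfolding t_def by simp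
    then have "\<bar>h\<bar> * (4 * (q^2 + 1)) \<le> d * \<bar>r\<bar>" using q1 by (simp add: pos_le_divide_eq)
    then have "\<bar>h\<bar> * 2 * (q^2 + 1) \<le> d * \<bar>r\<bar> / 2" by (simp add: algebra_simps)
    then show "\<bar>h\<bar> * 2 * (q^2 + 1) < d * \<bar>r\<bar>" using dr by linarith
  qed
  then show ?thesis using t0 by blast
qed

lemma sign_pattern:
  fixes M :: "real mat"
  assumes M: "M \<in> S n" and n: "n \<ge> 2"
    and minim: "\<forall>M'\<in>S n. lam \<le> lambda M' (n - 1)"
    and u: "u \<in> carrier_vec n" "u \<bullet> u = 1" "M *\<^sub>v u = lamn \<cdot>\<^sub>v u"
    and w: "w \<in> carrier_vec n" "w \<bullet> w = 1" "M *\<^sub>v w = lam \<cdot>\<^sub>v w"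
    and uw: "u \<bullet> w = 0" and lt: "lamn < lam"
    and i: "i < n" and j: "j < n"
  shows "(w$i * w$j > 0 \<longrightarrow> M $$ (i,j) = 0) \<and> (w$i * w$j < 0 \<longrightarrow> M $$ (i,j) = 1)"
proof -
  have M01: "0 \<le> M $$ (i,j)" "M $$ (i,j) \<le> 1" using M i j unfolding S_def by auto
  define p where "p = (if i = j then u$i * u$i else 2 * u$i * u$j)"
  define q where "q = (if i = j then u$i * w$i else u$i * w$j + u$j * w$i)"
  define r where "r = (if i = j then w$i * w$i else 2 * w$i * w$j)"
  note pc = perturb_contra[OF M n minim u w uw lt i j]
  have d: "lam - lamn > 0" using lt by simp
  show ?thesis
  proof (intro conjI impI)
    assume pos: "w$i * w$j > 0"
    have r0: "r > 0" unfolding r_def using pos by (auto simp: zero_less_mult_iff)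
    obtain t where t: "t > 0" and tt: "\<And>h. \<bar>h\<bar> \<le> t \<Longrightarrow> \<bar>h\<bar> * 2 * (\<bar>p\<bar> + 1) \<le> lam - lamn \<and> \<bar>h\<bar> * 2 * (q^2 + 1) < (lam - lamn) * \<bar>r\<bar>"
      using small_h_exists[OF d, of r p q] r0 by auto
    show "M $$ (i,j) = 0"
    proof (rule ccontr)
      assume "M $$ (i,j) \<noteq> 0"
      then have Mp: "M $$ (i,j) > 0" using M01 by simp
      define c where "c = M $$ (i,j) - min (M $$ (i,j)) t"
      have hc: "c - M $$ (i,j) = - min (M $$ (i,j)) t" unfolding c_def by simp
      have habs: "\<bar>c - M $$ (i,j)\<bar> \<le> t" unfolding hc using t Mp by simp
      show False
      proof (rule pc)
        show "0 \<le> c" "c \<le> 1" unfolding c_def using M01 t by auto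
        show "(c - M$$(i,j)) * (if i = j then w$i * w$i else 2 * w$i * w$j) < 0"
          unfolding hc r_def[symmetric] using r0 t Mp by (simp add: mult_pos_pos)
        show "\<bar>c - M$$(i,j)\<bar> * 2 * (\<bar>if i = j then u$i * u$i else 2 * u$i * u$j\<bar> + 1) \<le> lam - lamn"
          using tt[OF habs] unfolding p_def by simp
        show "\<bar>c - M$$(i,j)\<bar> * 2 * ((if i = j then u$i * w$i else u$i * w$j + u$j * w$i)^2 + 1)
           < (lam - lamn) * \<bar>if i = j then w$i * w$i else 2 * w$i * w$j\<bar>"
          using tt[OF habs] unfolding q_def r_def by simp
      qed
    qed
  next
    assume neg: "w$i * w$j < 0"
    then have ij: "i \<noteq> j" by (metis not_square_less_zero)
    have r0: "r < 0" unfolding r_def using neg ij by simp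
    obtain t where t: "t > 0" and tt: "\<And>h. \<bar>h\<bar> \<le> t \<Longrightarrow> \<bar>h\<bar> * 2 * (\<bar>p\<bar> + 1) \<le> lam - lamn \<and> \<bar>h\<bar> * 2 * (q^2 + 1) < (lam - lamn) * \<bar>r\<bar>"
      using small_h_exists[OF d, of r p q] r0 by auto
    show "M $$ (i,j) = 1"
    proof (rule ccontr)
      assume "M $$ (i,j) \<noteq> 1"
      then have Mp: "M $$ (i,j) < 1" using M01 by simp
      define c where "c = M $$ (i,j) + min (1 - M $$ (i,j)) t"
      have hc: "c - M $$ (i,j) = min (1 - M $$ (i,j)) t" unfolding c_def by simp
      have habs: "\<bar>c - M $$ (i,j)\<bar> \<le> t" unfolding hc using t Mp by simp
      show False
      proof (rule pc)
        show "0 \<le> c" "c \<le> 1" unfolding c_def using M01 t by auto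
        show "(c - M$$(i,j)) * (if i = j then w$i * w$i else 2 * w$i * w$j) < 0"
          unfolding hc r_def[symmetric] using r0 t Mp by (simp add: mult_pos_neg)
        show "\<bar>c - M$$(i,j)\<bar> * 2 * (\<bar>if i = j then u$i * u$i else 2 * u$i * u$j\<bar> + 1) \<le> lam - lamn"
          using tt[OF habs] unfolding p_def by simp
        show "\<bar>c - M$$(i,j)\<bar> * 2 * ((if i = j then u$i * w$i else u$i * w$j + u$j * w$i)^2 + 1)
           < (lam - lamn) * \<bar>if i = j then w$i * w$i else 2 * w$i * w$j\<bar>"
          using tt[OF habs] unfolding q_def r_def by simp
      qed
    qed
  qed
qed

lemma trace_eigs:
  fixes A :: "real mat"
  assumes A: "A \<in> carrier_mat n n" "transpose_mat A = A"
  shows "(\<Sum>i<n. A $$ (i,i)) = sum_list (eigs_desc A)"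
proof -
  obtain Q D where Q: "Q \<in> carrier_mat n n" and D: "D \<in> carrier_mat n n"
    and QQ: "transpose_mat Q * Q = 1\<^sub>m n" and QQ': "Q * transpose_mat Q = 1\<^sub>m n"
    and Dd: "diagonal_mat D" and AQ: "A = Q * D * transpose_mat Q"
    and ed: "eigs_desc A = rev (sort (diag_mat D))"
    using spectral_data[OF A] by blast
  have QD: "\<And>i l. i < n \<Longrightarrow> l < n \<Longrightarrow> (Q * D) $$ (i,l) = Q $$ (i,l) * D $$ (l,l)"
  proof -
    fix i l assume i: "i < n" and l: "l < n"
    have "(Q * D) $$ (i,l) = (\<Sum>k\<in>{0..<n}. Q $$ (i,k) * D $$ (k,l))"
      using Q D i l by (simp add: scalar_prod_def)
    also have "\<dots> = (\<Sum>k\<in>{0..<n}. if k = l then Q $$ (i,l) * D $$ (l,l) else 0)"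
      using Dd D l unfolding diagonal_mat_def by (intro sum.cong refl) auto
    also have "\<dots> = Q $$ (i,l) * D $$ (l,l)" using l by (simp add: sum.delta)
    finally show "(Q * D) $$ (i,l) = Q $$ (i,l) * D $$ (l,l)" .
  qed
  have Aii: "\<And>i. i < n \<Longrightarrow> A $$ (i,i) = (\<Sum>l<n. D $$ (l,l) * (Q $$ (i,l) * Q $$ (i,l)))"
  proof -
    fix i assume i: "i < n"
    have QDc: "Q * D \<in> carrier_mat n n" using Q D by simp
    have "A $$ (i,i) = row (Q * D) i \<bullet> col (transpose_mat Q) i"
      unfolding AQ using Q QDc i by (intro index_mult_mat(1)) auto
    also have "\<dots> = (\<Sum>l\<in>{0..<n}. row (Q * D) i $ l * col (transpose_mat Q) i $ l)"
      using Q by (simp only: scalar_prod_def) simp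
    also have "\<dots> = (\<Sum>l\<in>{0..<n}. (Q * D) $$ (i,l) * transpose_mat Q $$ (l,i))"
      using Q QDc i by (intro sum.cong refl) auto
    also have "\<dots> = (\<Sum>l<n. D $$ (l,l) * (Q $$ (i,l) * Q $$ (i,l)))"
      using Q i QD by (auto simp: lessThan_atLeast0 intro!: sum.cong)
    finally show "A $$ (i,i) = (\<Sum>l<n. D $$ (l,l) * (Q $$ (i,l) * Q $$ (i,l)))" .
  qed
  have Qcol: "\<And>l. l < n \<Longrightarrow> (\<Sum>i<n. Q $$ (i,l) * Q $$ (i,l)) = 1"
  proof -
    fix l assume l: "l < n"
    have "(transpose_mat Q * Q) $$ (l,l) = (\<Sum>i<n. Q $$ (i,l) * Q $$ (i,l))"
      using Q l by (simp add: scalar_prod_def lessThan_atLeast0)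
    then show "(\<Sum>i<n. Q $$ (i,l) * Q $$ (i,l)) = 1" using QQ l by simp
  qed
  have "(\<Sum>i<n. A $$ (i,i)) = (\<Sum>i<n. \<Sum>l<n. D $$ (l,l) * (Q $$ (i,l) * Q $$ (i,l)))"
    using Aii by simp
  also have "\<dots> = (\<Sum>l<n. \<Sum>i<n. D $$ (l,l) * (Q $$ (i,l) * Q $$ (i,l)))" by (rule sum.swap)
  also have "\<dots> = (\<Sum>l<n. D $$ (l,l))" by (simp add: sum_distrib_left[symmetric] Qcol)
  also have "\<dots> = sum_list (diag_mat D)" using D
    by (simp add: diag_mat_def interv_sum_list_conv_sum_set_nat lessThan_atLeast0)
  also have "\<dots> = sum_list (eigs_desc A)" unfolding ed
    by (metis sum_list_rev mset_sort sum_mset_sum_list)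
  finally show ?thesis .
qed

lemma sum3:
  fixes f :: "nat \<Rightarrow> real"
  assumes n: "n \<ge> 3" and f: "\<And>k. k \<ge> 3 \<Longrightarrow> k < n \<Longrightarrow> f k = 0"
  shows "(\<Sum>k<n. f k) = f 0 + f 1 + f 2"
proof -
  have "(\<Sum>k<n. f k) = (\<Sum>k<3. f k)"
    using n f by (intro sum.mono_neutral_right) auto
  also have "\<dots> = f 0 + f 1 + f 2" by (simp add: numeral_3_eq_3 numeral_2_eq_2)
  finally show ?thesis .
qed

lemma JI_bound:
  assumes n: "n \<ge> 3"
  shows "mat n n (\<lambda>(i,j). if i = j then 0 else 1) \<in> S n \<and>
         lambda (mat n n (\<lambda>(i,j). if i = j then 0 else (1::real))) (n - 1) < - 1 / 2"
proof
  define JI :: "real mat" where "JI = mat n n (\<lambda>(i,j). if i = j then 0 else 1)"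
  have JIc: "JI \<in> carrier_mat n n" by (simp add: JI_def)
  have JIs: "transpose_mat JI = JI" by (rule eq_matI) (auto simp: JI_def)
  show "mat n n (\<lambda>(i,j). if i = j then 0 else 1) \<in> S n" unfolding S_def by auto
  define a :: "real vec" where "a = vec n (\<lambda>k. if k = 0 then 1 / sqrt 2 else if k = 1 then - 1 / sqrt 2 else 0)"
  define b :: "real vec" where "b = vec n (\<lambda>k. if k = 0 then 1 / sqrt 6 else if k = 1 then 1 / sqrt 6 else if k = 2 then - 2 / sqrt 6 else 0)"
  have a: "a \<in> carrier_vec n" and b: "b \<in> carrier_vec n" by (simp_all add: a_def b_def)
  have s2: "sqrt 2 * sqrt 2 = (2::real)" by simp
  have s6: "sqrt 6 * sqrt 6 = (6::real)" by simp
  have aa: "a \<bullet> a = 1"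
  proof -
    have "a \<bullet> a = (\<Sum>k<n. a $ k * a $ k)" using a by (simp add: scalar_prod_def lessThan_atLeast0)
    also have "\<dots> = a$0 * a$0 + a$1 * a$1 + a$2 * a$2" by (rule sum3[OF n], simp add: a_def)
    also have "\<dots> = 1" using n by (simp add: a_def field_simps s2)
    finally show ?thesis .
  qed
  have bb: "b \<bullet> b = 1"
  proof -
    have "b \<bullet> b = (\<Sum>k<n. b $ k * b $ k)" using b by (simp add: scalar_prod_def lessThan_atLeast0)
    also have "\<dots> = b$0 * b$0 + b$1 * b$1 + b$2 * b$2" by (rule sum3[OF n], simp add: b_def)
    also have "\<dots> = 1" using n by (simp add: b_def field_simps s6)
    finally show ?thesis .
  qed
  have ab: "a \<bullet> b = 0"
  proof -
    have "a \<bullet> b = (\<Sum>k<n. a $ k * b $ k)" using b by (simp add: scalar_prod_def lessThan_atLeast0)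
    also have "\<dots> = a$0 * b$0 + a$1 * b$1 + a$2 * b$2" by (rule sum3[OF n], simp add: a_def b_def)
    also have "\<dots> = 0" using n by (simp add: a_def b_def field_simps)
    finally show ?thesis .
  qed
  have suma: "(\<Sum>k<n. a $ k) = 0"
  proof -
    have "(\<Sum>k<n. a $ k) = a$0 + a$1 + a$2" by (rule sum3[OF n], simp add: a_def)
    also have "\<dots> = 0" using n by (simp add: a_def)
    finally show ?thesis .
  qed
  have sumb: "(\<Sum>k<n. b $ k) = 0"
  proof -
    have "(\<Sum>k<n. b $ k) = b$0 + b$1 + b$2" by (rule sum3[OF n], simp add: b_def)
    also have "\<dots> = 0" using n by (simp add: b_def field_simps)
    finally show ?thesis .
  qed
  have "lambda JI (n - 1) < - 1 / 2"
  proof (rule lambda_second_lt[OF JIc JIs _ a b aa bb ab])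
    show "n \<ge> 2" using n by simp
    fix \<alpha> \<beta> :: real assume ab0: "(\<alpha>, \<beta>) \<noteq> (0, 0)"
    define z where "z = \<alpha> \<cdot>\<^sub>v a + \<beta> \<cdot>\<^sub>v b"
    have z: "z \<in> carrier_vec n" using a b by (simp add: z_def)
    have zk: "\<And>k. k < n \<Longrightarrow> z $ k = \<alpha> * a $ k + \<beta> * b $ k" using a b by (simp add: z_def)
    have sz: "(\<Sum>k<n. z $ k) = 0"
      using zk suma sumb by (simp add: sum.distrib sum_distrib_left[symmetric])
    have zz: "z \<bullet> z = \<alpha>^2 + \<beta>^2" unfolding z_def using a b aa bb ab
      by (simp add: add_scalar_prod_distrib scalar_prod_add_distrib[of _ n] comm_scalar_prod[of b n a] power2_eq_square)
    have "z \<bullet> (JI *\<^sub>v z) = (\<Sum>k<n. \<Sum>l<n. z$k * JI$$(k,l) * z$l)" by (rule qf_sum[OF JIc z])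
    also have "\<dots> = (\<Sum>k<n. z$k * (\<Sum>l<n. z$l) - z$k * z$k)"
    proof (intro sum.cong refl)
      fix k assume k: "k \<in> {..<n}"
      have "(\<Sum>l<n. z$k * JI$$(k,l) * z$l) = (\<Sum>l<n. z$k * z$l - (if l = k then z$k * z$k else 0))"
        using k by (intro sum.cong refl) (auto simp: JI_def)
      also have "\<dots> = z$k * (\<Sum>l<n. z$l) - z$k * z$k"
        using k by (simp add: sum_subtractf sum_distrib_left sum.delta)
      finally show "(\<Sum>l<n. z$k * JI$$(k,l) * z$l) = z$k * (\<Sum>l<n. z$l) - z$k * z$k" .
    qed
    also have "\<dots> = - (z \<bullet> z)" using z sz by (simp add: sum_subtractf scalar_prod_def lessThan_atLeast0 sum_negf)
    finally have "z \<bullet> (JI *\<^sub>v z) = - (\<alpha>^2 + \<beta>^2)" using zz by simp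
    moreover have "\<alpha>^2 + \<beta>^2 > 0" using ab0 by (auto simp: sum_power2_gt_zero_iff)
    ultimately show "z \<bullet> (JI *\<^sub>v z) < - 1 / 2 * (\<alpha>^2 + \<beta>^2)" by (simp add: field_simps)
  qed
  then show "lambda (mat n n (\<lambda>(i,j). if i = j then 0 else (1::real))) (n - 1) < - 1 / 2"
    unfolding JI_def .
qed

lemma length_eigs:
  fixes A :: "real mat"
  assumes A: "A \<in> carrier_mat n n" "transpose_mat A = A"
  shows "length (eigs_desc A) = n"
proof -
  obtain Q D where D: "D \<in> carrier_mat n n" and ed: "eigs_desc A = rev (sort (diag_mat D))"
    using spectral_data[OF A] by metis
  show ?thesis unfolding ed using D by (simp add: diag_mat_def)
qed

lemma lam_neg:
  assumes n: "n \<ge> 2" and sm: "simple_minimiser n M"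
  shows "lambda M (n - 1) < 0"
proof -
  have MS: "M \<in> S n" and lt: "lambda M n < lambda M (n - 1)"
    and minim: "\<forall>M'\<in>S n. lambda M (n - 1) \<le> lambda M' (n - 1)"
    using sm unfolding simple_minimiser_def by auto
  have Mc: "M \<in> carrier_mat n n" and Ms: "transpose_mat M = M"
    and M01: "\<And>k l. k < n \<Longrightarrow> l < n \<Longrightarrow> 0 \<le> M $$ (k,l)"
    using MS unfolding S_def by auto
  show ?thesis
  proof (cases "n = 2")
    case True
    have le: "length (eigs_desc M) = 2" using length_eigs[OF Mc Ms] True by simp
    have "(\<Sum>i<n. M $$ (i,i)) = sum_list (eigs_desc M)" by (rule trace_eigs[OF Mc Ms])
    also have "\<dots> = eigs_desc M ! 0 + eigs_desc M ! 1"
      using le by (cases "eigs_desc M") (auto simp: length_Suc_conv)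
    also have "\<dots> = lambda M 1 + lambda M 2" by (simp add: lambda_def)
    finally have tr: "(\<Sum>i<n. M $$ (i,i)) = lambda M 1 + lambda M 2" .
    have "(\<Sum>i<n. M $$ (i,i)) \<ge> 0" using M01 by (intro sum_nonneg) auto
    then have pos: "lambda M 1 > 0" using tr lt True by simp
    define Oz :: "real mat" where "Oz = 0\<^sub>m 2 2"
    have OS: "Oz \<in> S 2" unfolding S_def Oz_def by auto
    have "lambda Oz (2 - 1) < lambda M 1"
    proof (rule lambda_second_lt[of Oz 2 "unit_vec 2 0" "unit_vec 2 1"])
      show "Oz \<in> carrier_mat 2 2" "transpose_mat Oz = Oz" unfolding Oz_def by auto
      fix \<alpha> \<beta> :: real assume "(\<alpha>, \<beta>) \<noteq> (0, 0)"
      then have ap: "\<alpha>^2 + \<beta>^2 > 0" by (auto simp: sum_power2_gt_zero_iff)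
      define x :: "real vec" where "x = \<alpha> \<cdot>\<^sub>v unit_vec 2 0 + \<beta> \<cdot>\<^sub>v unit_vec 2 1"
      have x: "x \<in> carrier_vec 2" by (simp add: x_def)
      have "Oz *\<^sub>v x = 0\<^sub>v 2" unfolding Oz_def using x by (intro eq_vecI) (auto simp: scalar_prod_def)
      then have "x \<bullet> (Oz *\<^sub>v x) = 0" using scalar_prod_right_zero[OF x] by simp
      then show "(\<alpha> \<cdot>\<^sub>v unit_vec 2 0 + \<beta> \<cdot>\<^sub>v unit_vec 2 1) \<bullet> (Oz *\<^sub>v (\<alpha> \<cdot>\<^sub>v unit_vec 2 0 + \<beta> \<cdot>\<^sub>v unit_vec 2 1))
          < lambda M 1 * (\<alpha>^2 + \<beta>^2)"
        using pos ap unfolding x_def[symmetric] by simp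
    qed auto
    moreover have "lambda M (n - 1) \<le> lambda Oz (n - 1)" using minim OS True by auto
    ultimately show ?thesis using True by simp
  next
    case False
    then have n3: "n \<ge> 3" using n by simp
    have "lambda M (n - 1) \<le> lambda (mat n n (\<lambda>(i,j). if i = j then 0 else (1::real))) (n - 1)"
      using minim JI_bound[OF n3] by blast
    then show ?thesis using JI_bound[OF n3] by simp
  qed
qed

lemma core:
  fixes M :: "real mat" and w :: "real vec"
  assumes n: "n \<ge> 2" and sm: "simple_minimiser n M"
    and w: "w \<in> carrier_vec n" and ww: "w \<bullet> w = 1" and Mw: "M *\<^sub>v w = lambda M (n - 1) \<cdot>\<^sub>v w"
  defines "Ps \<equiv> {i. i < n \<and> w$i > 0}" and "Ns \<equiv> {i. i < n \<and> w$i < 0}"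
  shows "Ps \<noteq> {} \<and> Ns \<noteq> {} \<and>
    (\<forall>i\<in>Ps. w$i = 1 / sqrt (2 * real (card Ps))) \<and> (\<forall>i\<in>Ns. w$i = - 1 / sqrt (2 * real (card Ns))) \<and>
    lambda M (n - 1) = - sqrt (real (card Ps) * real (card Ns)) \<and>
    (\<forall>z<n. w$z = 0 \<longrightarrow> (1 / sqrt (real (card Ps))) * (\<Sum>p\<in>Ps. M$$(p,z)) = (1 / sqrt (real (card Ns))) * (\<Sum>q\<in>Ns. M$$(q,z))) \<and>
    (\<forall>i<n. \<forall>j<n. (w$i * w$j > 0 \<longrightarrow> M $$ (i,j) = 0) \<and> (w$i * w$j < 0 \<longrightarrow> M $$ (i,j) = 1))"
proof -
  define lam where "lam = lambda M (n - 1)"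
  define lamn where "lamn = lambda M n"
  have MS: "M \<in> S n" and lt: "lamn < lam"
    and minim: "\<forall>M'\<in>S n. lam \<le> lambda M' (n - 1)"
    using sm unfolding simple_minimiser_def lam_def lamn_def by auto
  have Mc: "M \<in> carrier_mat n n" and Ms: "transpose_mat M = M"
    using MS unfolding S_def by auto
  have Msym: "\<And>k l. k < n \<Longrightarrow> l < n \<Longrightarrow> M $$ (l,k) = M $$ (k,l)"
    by (metis Mc Ms carrier_matD index_transpose_mat(1))
  obtain u where u: "u \<in> carrier_vec n" "u \<bullet> u = 1" "M *\<^sub>v u = lamn \<cdot>\<^sub>v u"
    using min_eigvec[OF Mc Ms] n unfolding lamn_def by auto
  have Mw': "M *\<^sub>v w = lam \<cdot>\<^sub>v w" using Mw unfolding lam_def .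
  have "(transpose_mat M *\<^sub>v u) \<bullet> w = u \<bullet> (M *\<^sub>v w)" by (rule transpose_vec_mult_scalar[OF Mc w u(1)])
  then have "lamn * (u \<bullet> w) = lam * (u \<bullet> w)" unfolding Ms u(3) Mw' using u w by simp
  then have uw: "u \<bullet> w = 0" using lt by simp
  have sp: "\<forall>i<n. \<forall>j<n. (w$i * w$j > 0 \<longrightarrow> M $$ (i,j) = 0) \<and> (w$i * w$j < 0 \<longrightarrow> M $$ (i,j) = 1)"
    using sign_pattern[OF MS n minim u w ww Mw' uw lt] by blast
  have lneg: "lam < 0" using lam_neg[OF n sm] unfolding lam_def .
  have row: "\<And>i. i < n \<Longrightarrow> lam * w$i = (\<Sum>j<n. M$$(i,j) * w$j)"
  proof -
    fix i assume i: "i < n"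
    have "(M *\<^sub>v w) $ i = (\<Sum>j<n. M$$(i,j) * w$j)" using Mc w i by (simp add: scalar_prod_def lessThan_atLeast0)
    then show "lam * w$i = (\<Sum>j<n. M$$(i,j) * w$j)" unfolding Mw' using w i by simp
  qed
  have finP: "finite Ps" and finN: "finite Ns" unfolding Ps_def Ns_def by auto
  define SP where "SP = (\<Sum>j\<in>Ps. w$j)"
  define SN where "SN = (\<Sum>j\<in>Ns. w$j)"
  have rowP: "\<And>i. i \<in> Ps \<Longrightarrow> lam * w$i = SN"
  proof -
    fix i assume iP: "i \<in> Ps"
    then have i: "i < n" "w$i > 0" unfolding Ps_def by auto
    have "lam * w$i = (\<Sum>j<n. M$$(i,j) * w$j)" by (rule row[OF i(1)])
    also have "\<dots> = (\<Sum>j<n. if j \<in> Ns then w$j else 0)"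
    proof (intro sum.cong refl)
      fix j assume "j \<in> {..<n}"
      then have j: "j < n" by simp
      show "M$$(i,j) * w$j = (if j \<in> Ns then w$j else 0)"
      proof (cases "w$j > 0")
        case True then show ?thesis using sp i j unfolding Ns_def by (auto simp: zero_less_mult_iff)
      next
        case False
        show ?thesis
        proof (cases "w$j < 0")
          case True then have "w$i * w$j < 0" using i by (simp add: mult_pos_neg)
          then show ?thesis using sp i j True unfolding Ns_def by auto
        next
          case False
          then have "w$j = 0" using \<open>\<not> w$j > 0\<close> by simp
          then show ?thesis unfolding Ns_def by simp
        qed
      qed
    qed
    also have "\<dots> = (\<Sum>j\<in>{..<n} \<inter> Ns. w$j)" by (simp add: sum.inter_restrict)
    also have "{..<n} \<inter> Ns = Ns" unfolding Ns_def by auto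
    finally show "lam * w$i = SN" unfolding SN_def .
  qed
  have rowN: "\<And>i. i \<in> Ns \<Longrightarrow> lam * w$i = SP"
  proof -
    fix i assume iN: "i \<in> Ns"
    then have i: "i < n" "w$i < 0" unfolding Ns_def by auto
    have "lam * w$i = (\<Sum>j<n. M$$(i,j) * w$j)" by (rule row[OF i(1)])
    also have "\<dots> = (\<Sum>j<n. if j \<in> Ps then w$j else 0)"
    proof (intro sum.cong refl)
      fix j assume "j \<in> {..<n}"
      then have j: "j < n" by simp
      show "M$$(i,j) * w$j = (if j \<in> Ps then w$j else 0)"
      proof (cases "w$j < 0")
        case True then show ?thesis using sp i j unfolding Ps_def by (auto simp: zero_less_mult_iff)
      next
        case False
        show ?thesis
        proof (cases "w$j > 0")
          case True then have "w$i * w$j < 0" using i by (simp add: mult_neg_pos)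
          then show ?thesis using sp i j True unfolding Ps_def by auto
        next
          case False
          then have "w$j = 0" using \<open>\<not> w$j < 0\<close> by simp
          then show ?thesis unfolding Ps_def by simp
        qed
      qed
    qed
    also have "\<dots> = (\<Sum>j\<in>{..<n} \<inter> Ps. w$j)" by (simp add: sum.inter_restrict)
    also have "{..<n} \<inter> Ps = Ps" unfolding Ps_def by auto
    finally show "lam * w$i = SP" unfolding SP_def .
  qed
  have rowZ: "\<And>z. z < n \<Longrightarrow> w$z = 0 \<Longrightarrow> (\<Sum>j\<in>Ps. M$$(z,j) * w$j) + (\<Sum>j\<in>Ns. M$$(z,j) * w$j) = 0"
  proof -
    fix z assume z: "z < n" "w$z = 0"
    have "0 = (\<Sum>j<n. M$$(z,j) * w$j)" using row[OF z(1)] z(2) by simp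
    also have "\<dots> = (\<Sum>j<n. (if j \<in> Ps then M$$(z,j) * w$j else 0) + (if j \<in> Ns then M$$(z,j) * w$j else 0))"
      by (intro sum.cong refl) (auto simp: Ps_def Ns_def)
    also have "\<dots> = (\<Sum>j\<in>{..<n} \<inter> Ps. M$$(z,j) * w$j) + (\<Sum>j\<in>{..<n} \<inter> Ns. M$$(z,j) * w$j)"
      by (simp add: sum.distrib sum.inter_restrict)
    also have "{..<n} \<inter> Ps = Ps" unfolding Ps_def by auto
    also have "{..<n} \<inter> Ns = Ns" unfolding Ns_def by auto
    finally show "(\<Sum>j\<in>Ps. M$$(z,j) * w$j) + (\<Sum>j\<in>Ns. M$$(z,j) * w$j) = 0" by simp
  qed
  have wsum: "w \<bullet> w = (\<Sum>j\<in>Ps. w$j * w$j) + (\<Sum>j\<in>Ns. w$j * w$j)"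
  proof -
    have "w \<bullet> w = (\<Sum>j<n. w$j * w$j)" using w by (simp add: scalar_prod_def lessThan_atLeast0)
    also have "\<dots> = (\<Sum>j<n. (if j \<in> Ps then w$j * w$j else 0) + (if j \<in> Ns then w$j * w$j else 0))"
      by (intro sum.cong refl) (auto simp: Ps_def Ns_def)
    also have "\<dots> = (\<Sum>j\<in>{..<n} \<inter> Ps. w$j * w$j) + (\<Sum>j\<in>{..<n} \<inter> Ns. w$j * w$j)"
      by (simp add: sum.distrib sum.inter_restrict)
    also have "{..<n} \<inter> Ps = Ps" unfolding Ps_def by auto
    also have "{..<n} \<inter> Ns = Ns" unfolding Ns_def by auto
    finally show ?thesis .
  qed
  have PN: "Ps \<noteq> {} \<and> Ns \<noteq> {}"
  proof (rule ccontr)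
    assume "\<not> (Ps \<noteq> {} \<and> Ns \<noteq> {})"
    then have "Ps = {} \<or> Ns = {}" by simp
    then have "Ps = {} \<and> Ns = {}"
    proof
      assume P0: "Ps = {}"
      have "Ns = {}"
      proof (rule ccontr)
        assume "Ns \<noteq> {}"
        then obtain i where "i \<in> Ns" by auto
        then have "lam * w$i = 0" "w$i < 0" using rowN P0 unfolding SP_def Ns_def by auto
        then show False using lneg by simp
      qed
      then show ?thesis using P0 by simp
    next
      assume N0: "Ns = {}"
      have "Ps = {}"
      proof (rule ccontr)
        assume "Ps \<noteq> {}"
        then obtain i where "i \<in> Ps" by auto
        then have "lam * w$i = 0" "w$i > 0" using rowP N0 unfolding SN_def Ps_def by auto
        then show False using lneg by simp
      qed
      then show ?thesis using N0 by simp
    qed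
    then have "w \<bullet> w = 0" using wsum by simp
    then show False using ww by simp
  qed
  define P where "P = real (card Ps)"
  define N where "N = real (card Ns)"
  have P0: "P > 0" using PN finP unfolding P_def by (simp add: card_gt_0_iff)
  have N0: "N > 0" using PN finN unfolding N_def by (simp add: card_gt_0_iff)
  define a where "a = SN / lam"
  define b where "b = - (SP / lam)"
  have wa: "\<And>i. i \<in> Ps \<Longrightarrow> w$i = a" unfolding a_def using rowP lneg by (simp add: field_simps)
  have wb: "\<And>i. i \<in> Ns \<Longrightarrow> w$i = - b" unfolding b_def using rowN lneg by (simp add: field_simps)
  have apos: "a > 0" using PN wa unfolding Ps_def by force
  have bpos: "b > 0" using PN wb unfolding Ns_def by force
  have SPa: "SP = P * a" unfolding SP_def P_def using wa by simp
  have SNb: "SN = - (N * b)" unfolding SN_def N_def using wb by (simp add: sum_negf)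
  have e1: "lam * a = - (N * b)" unfolding a_def using lneg SNb by simp
  have e2: "lam * b = - (P * a)" unfolding b_def using lneg SPa by simp
  have "lam^2 * a = P * N * a"
  proof -
    have "lam^2 * a = lam * (lam * a)" by (simp add: power2_eq_square)
    also have "\<dots> = - N * (lam * b)" unfolding e1 by simp
    also have "\<dots> = P * N * a" unfolding e2 by simp
    finally show ?thesis .
  qed
  then have l2: "lam^2 = P * N" using apos by simp
  have lamv: "lam = - sqrt (P * N)"
  proof -
    have "sqrt (P * N) = \<bar>lam\<bar>" unfolding l2[symmetric] by simp
    then show ?thesis using lneg by simp
  qed
  have "w \<bullet> w = P * a^2 + N * b^2" unfolding wsum using wa wb unfolding P_def N_def
    by (simp add: power2_eq_square)
  moreover have "P * a^2 = - lam * a * b" using e2 by (simp add: power2_eq_square algebra_simps)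
  moreover have "N * b^2 = - lam * a * b" using e1 by (simp add: power2_eq_square algebra_simps)
  ultimately have "P * a^2 + N * b^2 = 1" "P * a^2 = N * b^2" using ww by auto
  then have Pa: "P * a^2 = 1 / 2" and Nb: "N * b^2 = 1 / 2" by linarith+
  have av: "a = 1 / sqrt (2 * P)"
  proof -
    have "a^2 = 1 / (2 * P)" using Pa P0 by (simp add: field_simps)
    then have "sqrt (a^2) = sqrt (1 / (2 * P))" by simp
    then show ?thesis using apos by (simp add: real_sqrt_divide)
  qed
  have bv: "b = 1 / sqrt (2 * N)"
  proof -
    have "b^2 = 1 / (2 * N)" using Nb N0 by (simp add: field_simps)
    then have "sqrt (b^2) = sqrt (1 / (2 * N))" by simp
    then show ?thesis using bpos by (simp add: real_sqrt_divide)
  qed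
  have zrow: "\<forall>z<n. w$z = 0 \<longrightarrow> (1 / sqrt P) * (\<Sum>p\<in>Ps. M$$(p,z)) = (1 / sqrt N) * (\<Sum>q\<in>Ns. M$$(q,z))"
  proof (intro allI impI)
    fix z assume z: "z < n" "w$z = 0"
    have "(\<Sum>j\<in>Ps. M$$(z,j) * w$j) = a * (\<Sum>p\<in>Ps. M$$(p,z))"
      using wa Msym z(1) unfolding Ps_def by (simp add: sum_distrib_left mult.commute)
    moreover have "(\<Sum>j\<in>Ns. M$$(z,j) * w$j) = - b * (\<Sum>q\<in>Ns. M$$(q,z))"
      using wb Msym z(1) unfolding Ns_def by (simp add: sum_distrib_left mult.commute sum_negf)
    ultimately have "a * (\<Sum>p\<in>Ps. M$$(p,z)) = b * (\<Sum>q\<in>Ns. M$$(q,z))" using rowZ[OF z] by simp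
    moreover have "a = (1 / sqrt 2) * (1 / sqrt P)" unfolding av by (simp add: real_sqrt_mult)
    moreover have "b = (1 / sqrt 2) * (1 / sqrt N)" unfolding bv by (simp add: real_sqrt_mult)
    ultimately have "(1 / sqrt 2) * ((1 / sqrt P) * (\<Sum>p\<in>Ps. M$$(p,z))) = (1 / sqrt 2) * ((1 / sqrt N) * (\<Sum>q\<in>Ns. M$$(q,z)))"
      by (simp only: mult.assoc)
    then show "(1 / sqrt P) * (\<Sum>p\<in>Ps. M$$(p,z)) = (1 / sqrt N) * (\<Sum>q\<in>Ns. M$$(q,z))"
      by (subst (asm) mult_cancel_left) simp
  qed
  show ?thesis
    using PN wa wb av bv lamv zrow sp unfolding lam_def P_def N_def by auto
qed

lemma sum_list_nth_sum:
  fixes f :: "nat \<Rightarrow> real"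
  assumes "distinct xs"
  shows "(\<Sum>i<length xs. f (xs ! i)) = (\<Sum>p\<in>set xs. f p)"
proof -
  have "(\<Sum>i<length xs. f (xs ! i)) = sum_list (map f xs)"
    by (simp add: sum_list_sum_nth lessThan_atLeast0)
  also have "\<dots> = (\<Sum>p\<in>set xs. f p)" using assms by (simp add: sum_list_distinct_conv_sum_set)
  finally show ?thesis .
qed

lemma perm_exists:
  fixes Ps Ns Zs :: "nat set"
  assumes U: "Ps \<union> Ns \<union> Zs = {..<n}" and d1: "Ps \<inter> Ns = {}" and d2: "Ps \<inter> Zs = {}" and d3: "Ns \<inter> Zs = {}"
  shows "\<exists>\<sigma>. \<sigma> permutes {..<n} \<and>
    (\<forall>i<card Ps. \<sigma> i \<in> Ps) \<and> (\<forall>i. card Ps \<le> i \<and> i < card Ps + card Ns \<longrightarrow> \<sigma> i \<in> Ns) \<and>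
    (\<forall>i. card Ps + card Ns \<le> i \<and> i < n \<longrightarrow> \<sigma> i \<in> Zs) \<and> card Ps + card Ns + card Zs = n \<and>
    (\<forall>f::nat\<Rightarrow>real. (\<Sum>i<card Ps. f (\<sigma> i)) = (\<Sum>p\<in>Ps. f p)) \<and>
    (\<forall>f::nat\<Rightarrow>real. (\<Sum>i<card Ns. f (\<sigma> (card Ps + i))) = (\<Sum>q\<in>Ns. f q))"
proof -
  have fP: "finite Ps" and fN: "finite Ns" and fZ: "finite Zs"
    using U by (metis finite_Un finite_lessThan)+
  define Lp where "Lp = sorted_list_of_set Ps"
  define Ln where "Ln = sorted_list_of_set Ns"
  define Lz where "Lz = sorted_list_of_set Zs"
  define L where "L = Lp @ Ln @ Lz"
  have lp: "length Lp = card Ps" "set Lp = Ps" "distinct Lp" using fP by (simp_all add: Lp_def)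
  have ln: "length Ln = card Ns" "set Ln = Ns" "distinct Ln" using fN by (simp_all add: Ln_def)
  have lz: "length Lz = card Zs" "set Lz = Zs" "distinct Lz" using fZ by (simp_all add: Lz_def)
  have dL: "distinct L" unfolding L_def using lp ln lz d1 d2 d3 by auto
  have sL: "set L = {..<n}" unfolding L_def using lp ln lz U by auto
  have cn: "card Ps + card Ns + card Zs = n"
  proof -
    have "length L = card Ps + card Ns + card Zs" unfolding L_def using lp ln lz by simp
    moreover have "card (set L) = length L" using distinct_card[OF dL] .
    ultimately show ?thesis using sL by simp
  qed
  have lL: "length L = n" using cn lp ln lz unfolding L_def by simp
  define \<sigma> where "\<sigma> = (\<lambda>i. if i < n then L ! i else i)"
  have "bij_betw ((!) L) {..<n} {..<n}" using bij_betw_nth[OF dL] lL sL by simp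
  then have "bij_betw \<sigma> {..<n} {..<n}" by (rule bij_betw_cong[THEN iffD1, rotated]) (simp add: \<sigma>_def)
  then have perm: "\<sigma> permutes {..<n}" by (rule bij_imp_permutes) (simp add: \<sigma>_def)
  have sP: "\<And>i. i < card Ps \<Longrightarrow> \<sigma> i = Lp ! i"
    using cn lp by (simp add: \<sigma>_def L_def nth_append)
  have sN: "\<And>i. i < card Ns \<Longrightarrow> \<sigma> (card Ps + i) = Ln ! i"
    using cn lp ln by (simp add: \<sigma>_def L_def nth_append)
  have sZ: "\<And>i. card Ps + card Ns \<le> i \<Longrightarrow> i < n \<Longrightarrow> \<sigma> i = Lz ! (i - (card Ps + card Ns))"
  proof -
    fix i assume i: "card Ps + card Ns \<le> i" "i < n"
    have "\<sigma> i = (Lp @ Ln @ Lz) ! i" using i by (simp add: \<sigma>_def L_def)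
    also have "\<dots> = (Ln @ Lz) ! (i - length Lp)" using i lp by (simp add: nth_append)
    also have "\<dots> = Lz ! (i - length Lp - length Ln)"
    proof -
      have "\<not> (i - length Lp < length Ln)" using i lp ln by arith
      then show ?thesis by (simp only: nth_append if_False)
    qed
    finally show "\<sigma> i = Lz ! (i - (card Ps + card Ns))" using lp ln by simp
  qed
  have c1: "\<forall>i<card Ps. \<sigma> i \<in> Ps" using sP lp by (metis nth_mem)
  have c2: "\<forall>i. card Ps \<le> i \<and> i < card Ps + card Ns \<longrightarrow> \<sigma> i \<in> Ns"
  proof (intro allI impI)
    fix i assume i: "card Ps \<le> i \<and> i < card Ps + card Ns"
    then obtain k where k: "i = card Ps + k" "k < card Ns" by (metis add_less_cancel_left le_add_diff_inverse)
    then show "\<sigma> i \<in> Ns" using sN ln by (metis nth_mem)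
  qed
  have c3: "\<forall>i. card Ps + card Ns \<le> i \<and> i < n \<longrightarrow> \<sigma> i \<in> Zs"
  proof (intro allI impI)
    fix i assume i: "card Ps + card Ns \<le> i \<and> i < n"
    then have "i - (card Ps + card Ns) < length Lz" using cn lz by arith
    then show "\<sigma> i \<in> Zs" using sZ i lz by (metis nth_mem)
  qed
  have c4: "\<forall>f::nat\<Rightarrow>real. (\<Sum>i<card Ps. f (\<sigma> i)) = (\<Sum>p\<in>Ps. f p)"
  proof
    fix f :: "nat \<Rightarrow> real"
    have "(\<Sum>i<card Ps. f (\<sigma> i)) = (\<Sum>i<length Lp. f (Lp ! i))" using sP lp by simp
    also have "\<dots> = (\<Sum>p\<in>Ps. f p)" using sum_list_nth_sum[OF lp(3)] lp by simp
    finally show "(\<Sum>i<card Ps. f (\<sigma> i)) = (\<Sum>p\<in>Ps. f p)" .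
  qed
  have c5: "\<forall>f::nat\<Rightarrow>real. (\<Sum>i<card Ns. f (\<sigma> (card Ps + i))) = (\<Sum>q\<in>Ns. f q)"
  proof
    fix f :: "nat \<Rightarrow> real"
    have "(\<Sum>i<card Ns. f (\<sigma> (card Ps + i))) = (\<Sum>i<length Ln. f (Ln ! i))" using sN ln by simp
    also have "\<dots> = (\<Sum>q\<in>Ns. f q)" using sum_list_nth_sum[OF ln(3)] ln by simp
    finally show "(\<Sum>i<card Ns. f (\<sigma> (card Ps + i))) = (\<Sum>q\<in>Ns. f q)" .
  qed
  show ?thesis using perm c1 c2 c3 cn c4 c5 by blast
qed

theorem theorem4p5:
  fixes n :: nat and M :: "real mat" and w :: "real vec"
  assumes "n \<ge> 2"
    and "simple_minimiser n M"
    and "w \<in> carrier_vec n" and "w \<bullet> w = 1"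
    and "M *\<^sub>v w = lambda M (n - 1) \<cdot>\<^sub>v w"
  shows "\<exists>\<sigma> P N Z X Y W.
    \<sigma> permutes {..<n} \<and> P \<ge> 1 \<and> N \<ge> 1 \<and> P + N + Z = n \<and>
    X \<in> carrier_mat P Z \<and> Y \<in> carrier_mat N Z \<and> W \<in> carrier_mat Z Z \<and>
    entries_01 X \<and> entries_01 Y \<and> entries_01 W \<and>
    (1 / sqrt (real P)) \<cdot>\<^sub>v (transpose_mat X *\<^sub>v vec P (\<lambda>_. 1)) =
      (1 / sqrt (real N)) \<cdot>\<^sub>v (transpose_mat Y *\<^sub>v vec N (\<lambda>_. 1)) \<and>
    mat n n (\<lambda>(i,j). M $$ (\<sigma> i, \<sigma> j)) = block_form P N Z X Y W \<and>
    vec n (\<lambda>i. w $ (\<sigma> i)) =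
      vec n (\<lambda>i. if i < P then 1 / sqrt (2 * real P)
                 else if i < P + N then - 1 / sqrt (2 * real N) else 0) \<and>
    lambda M (n - 1) = - sqrt (real P * real N)"
proof -
  note n = assms(1) and sm = assms(2) and w = assms(3) and ww = assms(4) and Mw = assms(5)
  define Ps where "Ps = {i. i < n \<and> w$i > 0}"
  define Ns where "Ns = {i. i < n \<and> w$i < 0}"
  define Zs where "Zs = {i. i < n \<and> w$i = 0}"
  have C: "Ps \<noteq> {} \<and> Ns \<noteq> {} \<and>
    (\<forall>i\<in>Ps. w$i = 1 / sqrt (2 * real (card Ps))) \<and> (\<forall>i\<in>Ns. w$i = - 1 / sqrt (2 * real (card Ns))) \<and>
    lambda M (n - 1) = - sqrt (real (card Ps) * real (card Ns)) \<and>
    (\<forall>z<n. w$z = 0 \<longrightarrow> (1 / sqrt (real (card Ps))) * (\<Sum>p\<in>Ps. M$$(p,z)) = (1 / sqrt (real (card Ns))) * (\<Sum>q\<in>Ns. M$$(q,z))) \<and>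
    (\<forall>i<n. \<forall>j<n. (w$i * w$j > 0 \<longrightarrow> M $$ (i,j) = 0) \<and> (w$i * w$j < 0 \<longrightarrow> M $$ (i,j) = 1))"
    unfolding Ps_def Ns_def by (rule core[OF n sm w ww Mw])
  have PN: "Ps \<noteq> {}" "Ns \<noteq> {}" using C by auto
  have wP: "\<And>i. i \<in> Ps \<Longrightarrow> w$i = 1 / sqrt (2 * real (card Ps))" using C by auto
  have wN: "\<And>i. i \<in> Ns \<Longrightarrow> w$i = - 1 / sqrt (2 * real (card Ns))" using C by auto
  have lamv: "lambda M (n - 1) = - sqrt (real (card Ps) * real (card Ns))" using C by auto
  have zrow: "\<And>z. z < n \<Longrightarrow> w$z = 0 \<Longrightarrow> (1 / sqrt (real (card Ps))) * (\<Sum>p\<in>Ps. M$$(p,z)) = (1 / sqrt (real (card Ns))) * (\<Sum>q\<in>Ns. M$$(q,z))"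
    using C by auto
  have sp: "\<And>i j. i < n \<Longrightarrow> j < n \<Longrightarrow> (w$i * w$j > 0 \<longrightarrow> M $$ (i,j) = 0) \<and> (w$i * w$j < 0 \<longrightarrow> M $$ (i,j) = 1)"
    using C by auto
  have MS: "M \<in> S n" using sm unfolding simple_minimiser_def by auto
  have Mc: "M \<in> carrier_mat n n" and Ms: "transpose_mat M = M"
    and M01: "\<And>k l. k < n \<Longrightarrow> l < n \<Longrightarrow> 0 \<le> M $$ (k,l) \<and> M $$ (k,l) \<le> 1"
    using MS unfolding S_def by auto
  have Msym: "\<And>k l. k < n \<Longrightarrow> l < n \<Longrightarrow> M $$ (l,k) = M $$ (k,l)"
    by (metis Mc Ms carrier_matD index_transpose_mat(1))
  have U: "Ps \<union> Ns \<union> Zs = {..<n}" unfolding Ps_def Ns_def Zs_def by auto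
  have d: "Ps \<inter> Ns = {}" "Ps \<inter> Zs = {}" "Ns \<inter> Zs = {}" unfolding Ps_def Ns_def Zs_def by auto
  obtain \<sigma> where perm: "\<sigma> permutes {..<n}"
    and sP: "\<forall>i<card Ps. \<sigma> i \<in> Ps" and sN: "\<forall>i. card Ps \<le> i \<and> i < card Ps + card Ns \<longrightarrow> \<sigma> i \<in> Ns"
    and sZ: "\<forall>i. card Ps + card Ns \<le> i \<and> i < n \<longrightarrow> \<sigma> i \<in> Zs"
    and cn: "card Ps + card Ns + card Zs = n"
    and sumP: "\<forall>f::nat\<Rightarrow>real. (\<Sum>i<card Ps. f (\<sigma> i)) = (\<Sum>p\<in>Ps. f p)"
    and sumN: "\<forall>f::nat\<Rightarrow>real. (\<Sum>i<card Ns. f (\<sigma> (card Ps + i))) = (\<Sum>q\<in>Ns. f q)"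
    using perm_exists[OF U d] by blast
  define P where "P = card Ps"
  define N where "N = card Ns"
  define Z where "Z = card Zs"
  have fP: "finite Ps" and fN: "finite Ns" unfolding Ps_def Ns_def by auto
  have P1: "P \<ge> 1" using PN fP unfolding P_def by (simp add: Suc_le_eq card_gt_0_iff)
  have N1: "N \<ge> 1" using PN fN unfolding N_def by (simp add: Suc_le_eq card_gt_0_iff)
  have cn': "P + N + Z = n" using cn unfolding P_def N_def Z_def .
  have slt: "\<And>i. i < n \<Longrightarrow> \<sigma> i < n" using permutes_in_image[OF perm] by simp
  have cP: "\<And>i. i < P \<Longrightarrow> \<sigma> i < n \<and> w $ \<sigma> i > 0" using sP unfolding P_def Ps_def by auto
  have cN: "\<And>i. P \<le> i \<Longrightarrow> i < P + N \<Longrightarrow> \<sigma> i < n \<and> w $ \<sigma> i < 0" using sN unfolding P_def N_def Ns_def by auto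
  have cZ: "\<And>i. P + N \<le> i \<Longrightarrow> i < n \<Longrightarrow> \<sigma> i < n \<and> w $ \<sigma> i = 0" using sZ unfolding P_def N_def Zs_def by auto
  define X where "X = mat P Z (\<lambda>(i,j). M $$ (\<sigma> i, \<sigma> (P + N + j)))"
  define Y where "Y = mat N Z (\<lambda>(i,j). M $$ (\<sigma> (P + i), \<sigma> (P + N + j)))"
  define W where "W = mat Z Z (\<lambda>(i,j). M $$ (\<sigma> (P + N + i), \<sigma> (P + N + j)))"
  have X: "X \<in> carrier_mat P Z" and Y: "Y \<in> carrier_mat N Z" and W: "W \<in> carrier_mat Z Z"
    by (simp_all add: X_def Y_def W_def)
  have e01: "entries_01 X \<and> entries_01 Y \<and> entries_01 W"
    unfolding entries_01_def X_def Y_def W_def using M01 slt cn' by auto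
  have vecs: "(1 / sqrt (real P)) \<cdot>\<^sub>v (transpose_mat X *\<^sub>v vec P (\<lambda>_. 1)) =
      (1 / sqrt (real N)) \<cdot>\<^sub>v (transpose_mat Y *\<^sub>v vec N (\<lambda>_. 1))"
  proof (rule eq_vecI)
    show "dim_vec ((1 / sqrt (real P)) \<cdot>\<^sub>v (transpose_mat X *\<^sub>v vec P (\<lambda>_. 1))) =
      dim_vec ((1 / sqrt (real N)) \<cdot>\<^sub>v (transpose_mat Y *\<^sub>v vec N (\<lambda>_. 1)))" using X Y by simp
    fix k assume "k < dim_vec ((1 / sqrt (real N)) \<cdot>\<^sub>v (transpose_mat Y *\<^sub>v vec N (\<lambda>_. 1)))"
    then have k: "k < Z" using Y by simp
    define z where "z = \<sigma> (P + N + k)"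
    have z: "z < n" "w $ z = 0" using cZ[of "P + N + k"] k cn' unfolding z_def by auto
    have "(transpose_mat X *\<^sub>v vec P (\<lambda>_. 1)) $ k = (\<Sum>i<P. M $$ (\<sigma> i, z))"
      using X k by (simp add: scalar_prod_def lessThan_atLeast0 X_def z_def)
    also have "\<dots> = (\<Sum>p\<in>Ps. M $$ (p, z))" using sumP[rule_format, of "\<lambda>p. M $$ (p, z)"] unfolding P_def by simp
    finally have xs: "(transpose_mat X *\<^sub>v vec P (\<lambda>_. 1)) $ k = (\<Sum>p\<in>Ps. M $$ (p, z))" .
    have "(transpose_mat Y *\<^sub>v vec N (\<lambda>_. 1)) $ k = (\<Sum>i<N. M $$ (\<sigma> (P + i), z))"
      using Y k by (simp add: scalar_prod_def lessThan_atLeast0 Y_def z_def)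
    also have "\<dots> = (\<Sum>q\<in>Ns. M $$ (q, z))" using sumN[rule_format, of "\<lambda>p. M $$ (p, z)"] unfolding P_def N_def by simp
    finally have ys: "(transpose_mat Y *\<^sub>v vec N (\<lambda>_. 1)) $ k = (\<Sum>q\<in>Ns. M $$ (q, z))" .
    show "((1 / sqrt (real P)) \<cdot>\<^sub>v (transpose_mat X *\<^sub>v vec P (\<lambda>_. 1))) $ k =
      ((1 / sqrt (real N)) \<cdot>\<^sub>v (transpose_mat Y *\<^sub>v vec N (\<lambda>_. 1))) $ k"
      using X Y k xs ys zrow[OF z] unfolding P_def N_def by simp
  qed
  have mats: "mat n n (\<lambda>(i,j). M $$ (\<sigma> i, \<sigma> j)) = block_form P N Z X Y W"
  proof (rule eq_matI)
    fix i j assume "i < dim_row (block_form P N Z X Y W)" "j < dim_col (block_form P N Z X Y W)"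
    then have i: "i < n" and j: "j < n" using cn' by (auto simp: block_form_def)
    have si: "\<sigma> i < n" and sj: "\<sigma> j < n" using slt i j by auto
    have "M $$ (\<sigma> i, \<sigma> j) = (if i < P then (if j < P then 0 else if j < P + N then 1 else X $$ (i, j - P - N))
     else if i < P + N then (if j < P then 1 else if j < P + N then 0 else Y $$ (i - P, j - P - N))
     else (if j < P then X $$ (j, i - P - N) else if j < P + N then Y $$ (j - P, i - P - N)
           else W $$ (i - P - N, j - P - N)))"
    proof -
      consider "i < P" | "P \<le> i \<and> i < P + N" | "P + N \<le> i" by linarith
      then show ?thesis
      proof cases
        case 1
        note ci = cP[OF 1]
        consider "j < P" | "P \<le> j \<and> j < P + N" | "P + N \<le> j" by linarith
        then show ?thesis
        proof cases
          case 1 then show ?thesis using ci cP[OF 1] sp[OF si sj] \<open>i < P\<close> by (auto simp: zero_less_mult_iff)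
        next
          case 2 then show ?thesis using ci cN[of j] sp[OF si sj] \<open>i < P\<close> by (auto simp: mult_pos_neg)
        next
          case 3 then show ?thesis using \<open>i < P\<close> j cn' by (simp add: X_def)
        qed
      next
        case 2
        note ci = cN[of i] 2
        consider "j < P" | "P \<le> j \<and> j < P + N" | "P + N \<le> j" by linarith
        then show ?thesis
        proof cases
          case 1 then show ?thesis using ci cP[OF 1] sp[OF si sj] by (auto simp: mult_neg_pos)
        next
          case 2 then show ?thesis using ci cN[of j] sp[OF si sj] by (auto simp: zero_less_mult_iff)
        next
          case 3
          have "i - P < N" "j - (P + N) < Z" using 3 ci j cn' by arith+
          then show ?thesis using 3 ci j cn' by (simp add: Y_def)
        qed
      next
        case 3
        consider "j < P" | "P \<le> j \<and> j < P + N" | "P + N \<le> j" by linarith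
        then show ?thesis
        proof cases
          case 1 then show ?thesis using 3 i j cn' Msym[OF si sj] by (simp add: X_def)
        next
          case 2
          have "j - P < N" "i - (P + N) < Z" using 2 3 i cn' by arith+
          then show ?thesis using 2 3 i j cn' Msym[OF si sj] by (simp add: Y_def)
        next
          case 4: 3
          then show ?thesis using 3 i j cn' by (simp add: W_def)
        qed
      qed
    qed
    then show "mat n n (\<lambda>(i,j). M $$ (\<sigma> i, \<sigma> j)) $$ (i,j) = block_form P N Z X Y W $$ (i,j)"
      using i j cn' by (simp add: block_form_def)
  qed (use cn' in \<open>auto simp: block_form_def\<close>)
  have vw: "vec n (\<lambda>i. w $ (\<sigma> i)) =
      vec n (\<lambda>i. if i < P then 1 / sqrt (2 * real P)
                 else if i < P + N then - 1 / sqrt (2 * real N) else 0)"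
  proof (rule eq_vecI)
    fix i assume "i < dim_vec (vec n (\<lambda>i. if i < P then 1 / sqrt (2 * real P)
                 else if i < P + N then - 1 / sqrt (2 * real N) else 0))"
    then have i: "i < n" by simp
    consider "i < P" | "P \<le> i \<and> i < P + N" | "P + N \<le> i" by linarith
    then show "vec n (\<lambda>i. w $ (\<sigma> i)) $ i = vec n (\<lambda>i. if i < P then 1 / sqrt (2 * real P)
                 else if i < P + N then - 1 / sqrt (2 * real N) else 0) $ i"
    proof cases
      case 1 then show ?thesis using i sP wP unfolding P_def by simp
    next
      case 2 then show ?thesis using i sN wN unfolding P_def N_def by simp
    next
      case 3 then show ?thesis using i cZ by simp
    qed
  qed simp
  show ?thesis
    by (rule exI[of _ \<sigma>], rule exI[of _ P], rule exI[of _ N], rule exI[of _ Z],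
        rule exI[of _ X], rule exI[of _ Y], rule exI[of _ W])
       (use perm P1 N1 cn' X Y W e01 vecs mats vw lamv in \<open>simp add: P_def N_def\<close>)
qed

end
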